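(* Under the standing assumption below, for every $\sigma\in\mathcal X_{J-h}\setminus\{\underline{-1},\underline{+1}\}$ one has $V_\sigma\le V^*:=2J$.
   Context: Let $\mathbb{T}^2$ denote the triangular lattice embedded in $\mathbb{R}^2$ and $\mathbb{H}^2$ its dual, the hexagonal lattice; each vertex $i$ of $\mathbb{H}^2$ is the centre of a unique closed triangular face of $\mathbb{T}^2$ (the face centred at $i$), and $d$ denotes the graph distance on $\mathbb{H}^2$, so $d(i,j)=1$ iff the faces centred at $i$ and $j$ share an edge. Fix an integer $L\ge1$ and let $\Lambda\subset\mathbb{H}^2$ be the set of sites in a parallelogram of side length $L$ cut along two coordinate axes of $\mathbb{T}^2$, with periodic boundary conditions; thus $\Lambda$ is a discrete torus with $|\Lambda|=2L^2$ sites, each having 3 nearest neighbours. Let $\mathcal X=\{-1,+1\}^\Lambda$ and let $\underline{+1}$, $\underline{-1}$ be the configurations with all spins $+1$, resp. $-1$. For $J,h>0$ the Hamiltonian is $H(\sigma)=-\frac J2\sum_{\{i,j\}\subset\Lambda:\,d(i,j)=1}\sigma(i)\sigma(j)-\frac h2\sum_{i\in\Lambda}\sigma(i)$ (sum over unordered nearest-neighbour pairs), so that $H(\sigma)-H(\underline{-1})=J|\gamma(\sigma)|-hN^+(\sigma)$, where $|\gamma(\sigma)|$ is the number of nearest-neighbour pairs carrying opposite spins and $N^+(\sigma)$ is the number of sites with spin $+1$. For $x\in\Lambda$, $\sigma^{(x)}$ denotes $\sigma$ with the spin at $x$ reversed. Standing assumption: $0<h<1$, $J\ge2h$, $\frac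 J{2h}-\frac12\notin\mathbb Z$, and $|\Lambda|\ge(4J/h)^2$. Metastability notions: a path is a finite sequence $(\omega_1,\dots,\omega_n)$ in $\mathcal X$ with each $\omega_{k+1}=\omega_k^{(x)}$ for some $x\in\Lambda$; $\Theta(\sigma,\eta)$ is the set of paths from $\sigma$ to $\eta$; $\Phi(\sigma,\eta)=\min_{\omega\in\Theta(\sigma,\eta)}\max_{\zeta\in\omega}H(\zeta)$ and $\Phi(A,B)=\min_{\sigma\in A,\eta\in B}\Phi(\sigma,\eta)$. $\mathcal I_\sigma=\{\eta: H(\eta)<H(\sigma)\}$; the stability level is $V_\sigma=\Phi(\sigma,\mathcal I_\sigma)-H(\sigma)$ ($V_\sigma=\infty$ if $\mathcal I_\sigma=\emptyset$); $\mathcal X_V=\{\sigma\in\mathcal X: V_\sigma>V\}$. *)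

theory Defs
  imports Complex_Main "HOL-Library.Extended_Real"
begin

text \<open>Sites of the hexagonal lattice on the discrete torus: a site is a triangular face
  of the triangular lattice in the L x L parallelogram, encoded as (a, b, up), with
  a, b < L lattice coordinates of the parallelogram cell and up = True for the upward
  triangle with corners (a,b),(a+1,b),(a,b+1) and up = False for the downward triangle
  with corners (a+1,b),(a,b+1),(a+1,b+1); coordinates are taken mod L.\<close>

type_synonym site = "nat \<times> nat \<times> bool"

definition Lam :: "nat \<Rightarrow> site set" where
  "Lam L = {0..<L} \<times> {0..<L} \<times> UNIV"

text \<open>Faces sharing an edge with the upward triangle at (a,b).\<close>
definition up_nbrs :: "nat \<Rightarrow> nat \<Rightarrow> nat \<Rightarrow> site set" where
  "up_nbrs L a b = {(a, b, False), (a, (b + L - 1) mod L, False), ((a + L - 1) mod L, b, False)}"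

definition adj :: "nat \<Rightarrow> site \<Rightarrow> site \<Rightarrow> bool" where
  "adj L i j \<longleftrightarrow> i \<in> Lam L \<and> j \<in> Lam L \<and>
     ((snd (snd i) \<and> j \<in> up_nbrs L (fst i) (fst (snd i))) \<or>
      (snd (snd j) \<and> i \<in> up_nbrs L (fst j) (fst (snd j))))"

definition edges :: "nat \<Rightarrow> site set set" where
  "edges L = {{i, j} | i j. adj L i j}"

definition conf :: "nat \<Rightarrow> (site \<Rightarrow> int) set" where
  "conf L = {\<sigma>. (\<forall>x. (x \<in> Lam L \<longrightarrow> \<sigma> x \<in> {-1, 1}) \<and> (x \<notin> Lam L \<longrightarrow> \<sigma> x = 0))}"

definition allplus :: "nat \<Rightarrow> site \<Rightarrow> int" where
  "allplus L = (\<lambda>x. if x \<in> Lam L then 1 else 0)"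

definition allminus :: "nat \<Rightarrow> site \<Rightarrow> int" where
  "allminus L = (\<lambda>x. if x \<in> Lam L then -1 else 0)"

definition Ham :: "nat \<Rightarrow> real \<Rightarrow> real \<Rightarrow> (site \<Rightarrow> int) \<Rightarrow> real" where
  "Ham L J h \<sigma> = - (J / 2) * (\<Sum>e\<in>edges L. (\<Prod>i\<in>e. real_of_int (\<sigma> i)))
                  - (h / 2) * (\<Sum>i\<in>Lam L. real_of_int (\<sigma> i))"

definition flip :: "(site \<Rightarrow> int) \<Rightarrow> site \<Rightarrow> site \<Rightarrow> int" where
  "flip \<sigma> x = \<sigma>(x := - \<sigma> x)"

definition is_path :: "nat \<Rightarrow> (site \<Rightarrow> int) list \<Rightarrow> bool" where
  "is_path L \<omega> \<longleftrightarrow> \<omega> \<noteq> [] \<and> set \<omega> \<subseteq> conf L \<and>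
     (\<forall>k. Suc k < length \<omega> \<longrightarrow> (\<exists>x\<in>Lam L. \<omega> ! Suc k = flip (\<omega> ! k) x))"

definition paths :: "nat \<Rightarrow> (site \<Rightarrow> int) \<Rightarrow> (site \<Rightarrow> int) \<Rightarrow> (site \<Rightarrow> int) list set" where
  "paths L \<sigma> \<eta> = {\<omega>. is_path L \<omega> \<and> hd \<omega> = \<sigma> \<and> last \<omega> = \<eta>}"

definition Phi :: "nat \<Rightarrow> real \<Rightarrow> real \<Rightarrow> (site \<Rightarrow> int) \<Rightarrow> (site \<Rightarrow> int) \<Rightarrow> real" where
  "Phi L J h \<sigma> \<eta> = Min ((\<lambda>\<omega>. Max (Ham L J h ` set \<omega>)) ` paths L \<sigma> \<eta>)"

definition PhiSet :: "nat \<Rightarrow> real \<Rightarrow> real \<Rightarrow> (site \<Rightarrow> int) set \<Rightarrow> (site \<Rightarrow> int) set \<Rightarrow> real" where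
  "PhiSet L J h A B = Min {Phi L J h \<sigma> \<eta> | \<sigma> \<eta>. \<sigma> \<in> A \<and> \<eta> \<in> B}"

definition Iset :: "nat \<Rightarrow> real \<Rightarrow> real \<Rightarrow> (site \<Rightarrow> int) \<Rightarrow> (site \<Rightarrow> int) set" where
  "Iset L J h \<sigma> = {\<eta> \<in> conf L. Ham L J h \<eta> < Ham L J h \<sigma>}"

definition stab :: "nat \<Rightarrow> real \<Rightarrow> real \<Rightarrow> (site \<Rightarrow> int) \<Rightarrow> ereal" where
  "stab L J h \<sigma> = (if Iset L J h \<sigma> = {} then \<infinity>
      else ereal (PhiSet L J h {\<sigma>} (Iset L J h \<sigma>) - Ham L J h \<sigma>))"

definition XV :: "nat \<Rightarrow> real \<Rightarrow> real \<Rightarrow> real \<Rightarrow> (site \<Rightarrow> int) set" where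
  "XV L J h V = {\<sigma> \<in> conf L. stab L J h \<sigma> > ereal V}"

end

theory Submission
  imports Defs "HOL-Library.Multiset"
begin


type_synonym face = "int \<times> int \<times> bool"

fun nbs :: "face \<Rightarrow> face list" where
  "nbs (u,v,True) = [(u,v,False),(u,v-1,False),(u-1,v,False)]"
| "nbs (u,v,False) = [(u,v,True),(u,v+1,True),(u+1,v,True)]"

definition pr :: "nat \<Rightarrow> face \<Rightarrow> site" where
  "pr L x = (nat (fst x mod int L), nat (fst (snd x) mod int L), snd (snd x))"

lemma pr_Lam: "L \<ge> 1 \<Longrightarrow> pr L x \<in> Lam L"
  unfolding pr_def Lam_def by (auto simp: nat_less_iff)

lemma pr_surj: "z \<in> Lam L \<Longrightarrow> pr L (int (fst z), int (fst (snd z)), snd (snd z)) = z"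
  unfolding pr_def Lam_def by (auto simp: )

lemma predmod: "(a::nat) < L \<Longrightarrow> (a + L - 1) mod L = (if a = 0 then L - 1 else a - 1)"
proof (cases "a = 0")
  case True
  assume "a < L" then have "L - 1 < L" by simp
  then show ?thesis using True by (simp add: mod_less)
next
  case False
  assume "a < L"
  then have "a + L - 1 = (a - 1) + L" using False by simp
  then have "(a + L - 1) mod L = (a - 1) mod L" by simp
  also have "\<dots> = a - 1" using \<open>a<L\<close> by simp
  finally show ?thesis using False by simp
qed

lemma sucmod: "(b::nat) < L \<Longrightarrow> (b + 1) mod L = (if b = L - 1 then 0 else b + 1)"
proof (cases "b = L - 1")
  case True
  assume "b < L" then have "b + 1 = L" using True by linarith
  then show ?thesis using True by simp
next
  case False
  assume "b < L" then have "b + 1 < L" using False by simp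
  then show ?thesis using False by simp
qed

lemma natmod_m1: "a < L \<Longrightarrow> nat ((int a - 1) mod int L) = (if a = 0 then L - 1 else a - 1)"
proof (cases "a = 0")
  case True
  assume "a < L"
  have "(-1::int) mod int L = int L - 1" using \<open>a<L\<close>
    by (simp add: zmod_minus1)
  then show ?thesis using True \<open>a<L\<close> by simp
next
  case False
  assume "a < L"
  then have "(int a - 1) mod int L = int a - 1" using False by simp
  then show ?thesis using False by simp
qed

lemma natmod_p1: "a < L \<Longrightarrow> nat ((int a + 1) mod int L) = (if a = L - 1 then 0 else a + 1)"
proof (cases "a = L - 1")
  case True
  assume "a < L"
  then have "int a + 1 = int L" using True by simp
  then show ?thesis using True by simp
next
  case False
  assume "a < L"
  then have "(int a + 1) mod int L = int a + 1" using False by simp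
  then show ?thesis using False by simp
qed

lemma natmod_0: "a < L \<Longrightarrow> nat (int a mod int L) = a"
  by simp

lemma pr_mod: "pr L (u,v,t) = pr L (u mod int L, v mod int L, t)"
  unfolding pr_def by simp

lemma up_nbrs_alt:
  assumes "a < L" "b < L"
  shows "up_nbrs L a b = {(a,b,False), (a, if b = 0 then L - 1 else b - 1, False), (if a = 0 then L - 1 else a - 1, b, False)}"
  unfolding up_nbrs_def using predmod[OF assms(1)] predmod[OF assms(2)] by simp

lemma pr_eq_iff: "L \<ge> 1 \<Longrightarrow> pr L (u,v,t) = pr L (u',v',t') \<longleftrightarrow> u mod int L = u' mod int L \<and> v mod int L = v' mod int L \<and> t = t'"
proof -
  assume "L \<ge> 1"
  then have "u mod int L \<ge> 0" "u' mod int L \<ge> 0" "v mod int L \<ge> 0" "v' mod int L \<ge> 0" by auto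
  then show ?thesis unfolding pr_def by (auto simp: eq_nat_nat_iff)
qed

lemma adj_norm:
  assumes L: "L \<ge> 2" and ab: "a < L" "b < L"
  shows "adj L (a,b,t) w \<longleftrightarrow> w \<in> pr L ` set (nbs (int a, int b, t))"
proof (cases t)
  case True
  define pa where "pa = (if a = 0 then L - 1 else a - 1)"
  define pb where "pb = (if b = 0 then L - 1 else b - 1)"
  have pab: "pa < L" "pb < L" using ab L unfolding pa_def pb_def by auto
  have 1: "pr L ` set (nbs (int a, int b, t)) = {(a,b,False), (a, pb, False), (pa, b, False)}"
    using True ab unfolding pa_def pb_def by (auto simp: pr_def natmod_m1)
  have 2: "up_nbrs L a b = {(a,b,False), (a, pb, False), (pa, b, False)}"
    unfolding up_nbrs_alt[OF ab] pa_def pb_def by simp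
  have 3: "adj L (a,b,t) w \<longleftrightarrow> w \<in> Lam L \<and> w \<in> up_nbrs L a b"
    using True ab unfolding adj_def by (auto simp: Lam_def up_nbrs_def)
  show ?thesis unfolding 3 1 2 using pab ab by (auto simp: Lam_def)
next
  case False
  obtain c d tt where w: "w = (c,d,tt)" by (cases w) auto
  define sa where "sa = (if a = L - 1 then 0 else a + 1)"
  define sb where "sb = (if b = L - 1 then 0 else b + 1)"
  have sab: "sa < L" "sb < L" using ab L unfolding sa_def sb_def by auto
  have 1: "pr L ` set (nbs (int a, int b, t)) = {(a,b,True), (a, sb, True), (sa, b, True)}"
    using False ab unfolding sa_def sb_def by (auto simp: pr_def natmod_p1)
  have 2: "adj L (a,b,t) (c,d,tt) \<longleftrightarrow> c < L \<and> d < L \<and> tt \<and> (a,b,False) \<in> up_nbrs L c d"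
    using False ab unfolding adj_def by (auto simp: Lam_def up_nbrs_def)
  have 3: "c < L \<Longrightarrow> d < L \<Longrightarrow> (a,b,False) \<in> up_nbrs L c d \<longleftrightarrow> (c = a \<and> d = b) \<or> (c = a \<and> d = sb) \<or> (c = sa \<and> d = b)"
  proof -
    assume cd: "c < L" "d < L"
    have e1: "b = (if d = 0 then L - 1 else d - 1) \<longleftrightarrow> d = sb"
      using cd ab L unfolding sb_def by (cases "d = 0"; cases "b = L - 1"; simp; linarith)
    have e2: "a = (if c = 0 then L - 1 else c - 1) \<longleftrightarrow> c = sa"
      using cd ab L unfolding sa_def by (cases "c = 0"; cases "a = L - 1"; simp; linarith)
    have m: "(a,b,False) \<in> up_nbrs L c d \<longleftrightarrow> (a = c \<and> b = d) \<or> (a = c \<and> b = (if d = 0 then L - 1 else d - 1)) \<or> (a = (if c = 0 then L - 1 else c - 1) \<and> b = d)"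
      unfolding up_nbrs_alt[OF cd] by blast
    show ?thesis unfolding m e1 e2 by blast
  qed
  have 4: "adj L (a,b,t) (c,d,tt) \<longleftrightarrow> c < L \<and> d < L \<and> tt \<and> ((c = a \<and> d = b) \<or> (c = a \<and> d = sb) \<or> (c = sa \<and> d = b))"
    using 2 3 by blast
  have 5: "(c,d,tt) \<in> {(a,b,True), (a, sb, True), (sa, b, True)} \<longleftrightarrow> tt \<and> ((c = a \<and> d = b) \<or> (c = a \<and> d = sb) \<or> (c = sa \<and> d = b))"
    by blast
  have 6: "(c < L \<and> d < L \<and> tt \<and> ((c = a \<and> d = b) \<or> (c = a \<and> d = sb) \<or> (c = sa \<and> d = b))) \<longleftrightarrow> tt \<and> ((c = a \<and> d = b) \<or> (c = a \<and> d = sb) \<or> (c = sa \<and> d = b))"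
    using sab ab by auto
  show ?thesis unfolding w by (simp only: 1 4 6 5)
qed

lemma pr_mod2: "u mod int L = u' mod int L \<Longrightarrow> v mod int L = v' mod int L \<Longrightarrow> pr L (u,v,t) = pr L (u', v', t)"
  unfolding pr_def by simp

lemma pr_nbs_mod: "map (pr L) (nbs (u,v,t)) = map (pr L) (nbs (u mod int L, v mod int L, t))"
  by (cases t) (simp_all add: pr_def mod_diff_left_eq mod_add_left_eq)

lemma adj_pr:
  assumes L: "L \<ge> 2"
  shows "adj L (pr L x) w \<longleftrightarrow> w \<in> pr L ` set (nbs x)"
proof -
  obtain u v t where x: "x = (u,v,t)" by (cases x) auto
  have "pr L x = (nat (u mod int L), nat (v mod int L), t)" by (simp add: x pr_def)
  moreover have "nat (u mod int L) < L" "nat (v mod int L) < L" using L by (auto simp: nat_less_iff)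
  ultimately have "adj L (pr L x) w \<longleftrightarrow> w \<in> pr L ` set (nbs (int (nat (u mod int L)), int (nat (v mod int L)), t))"
    using adj_norm[OF L] by simp
  also have "\<dots> \<longleftrightarrow> w \<in> pr L ` set (nbs x)" using L
    by (simp add: x pr_nbs_mod[of L u v t] flip: set_map)
  finally show ?thesis .
qed

lemma distinct_nbs:
  assumes L: "L \<ge> 2"
  shows "distinct (map (pr L) (nbs x))"
proof -
  obtain u v t where x: "x = (u,v,t)" by (cases x) auto
  have a: "(z - 1) mod int L \<noteq> z mod int L" for z
  proof
    assume "(z - 1) mod int L = z mod int L"
    then have "int L dvd (z - (z - 1))" by (metis mod_eq_dvd_iff)
    then show False using L by simp
  qed
  have b: "(z + 1) mod int L \<noteq> z mod int L" for z
    using a[of "z+1"] by simp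
  have a': "z mod int L \<noteq> (z - 1) mod int L" for z using a[of z] by metis
  have b': "z mod int L \<noteq> (z + 1) mod int L" for z using b[of z] by metis
  show ?thesis using a b a' b' L unfolding x by (cases t) (auto simp: pr_eq_iff)
qed



lemma adj_sym: "adj L i j \<longleftrightarrow> adj L j i"
  unfolding adj_def by auto

lemma adj_irrefl: "\<not> adj L i i"
  by (cases i) (auto simp: adj_def up_nbrs_def)

lemma edges_sub: "edges L \<subseteq> Pow (Lam L)"
  unfolding edges_def adj_def by auto

lemma finite_Lam: "finite (Lam L)"
  unfolding Lam_def by simp

lemma finite_edges: "finite (edges L)"
  using edges_sub finite_Lam by (meson finite_Pow_iff finite_subset)

definition Nb :: "nat \<Rightarrow> site \<Rightarrow> site set" where
  "Nb L z = {w. adj L z w}"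

lemma Ez_eq: "{e \<in> edges L. z \<in> e} = (\<lambda>w. {z, w}) ` Nb L z"
proof
  show "{e \<in> edges L. z \<in> e} \<subseteq> (\<lambda>w. {z, w}) ` Nb L z"
  proof
    fix e assume "e \<in> {e \<in> edges L. z \<in> e}"
    then obtain i j where e: "e = {i,j}" "adj L i j" "z \<in> e" unfolding edges_def by auto
    show "e \<in> (\<lambda>w. {z, w}) ` Nb L z"
    proof (cases "i = z")
      case True then show ?thesis using e unfolding Nb_def by auto
    next
      case False then have "j = z" using e by auto
      then show ?thesis using e adj_sym[of L i j] unfolding Nb_def by (auto simp: insert_commute)
    qed
  qed
next
  show "(\<lambda>w. {z, w}) ` Nb L z \<subseteq> {e \<in> edges L. z \<in> e}"
    unfolding Nb_def edges_def by blast
qed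

lemma inj_pair: "inj_on (\<lambda>w. {z, w}) (Nb L z)"
proof
  fix w w' assume "w \<in> Nb L z" "w' \<in> Nb L z" "{z, w} = {z, w'}"
  moreover have "w \<noteq> z" "w' \<noteq> z" using \<open>w \<in> Nb L z\<close> \<open>w' \<in> Nb L z\<close> adj_irrefl[of L z] unfolding Nb_def by auto
  ultimately show "w = w'" by (metis doubleton_eq_iff)
qed

definition Ssum :: "nat \<Rightarrow> (site \<Rightarrow> int) \<Rightarrow> real" where
  "Ssum L \<sigma> = (\<Sum>e\<in>edges L. (\<Prod>i\<in>e. real_of_int (\<sigma> i)))"

lemma Ssum_flip:
  assumes z: "z \<in> Lam L"
  shows "Ssum L (flip \<sigma> z) - Ssum L \<sigma> = - 2 * (\<Sum>w\<in>Nb L z. real_of_int (\<sigma> z) * real_of_int (\<sigma> w))"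
proof -
  let ?E = "edges L" and ?Ez = "{e \<in> edges L. z \<in> e}"
  let ?f = "\<lambda>\<tau> e. (\<Prod>i\<in>e. real_of_int (\<tau> i))"
  have fin: "finite ?E" by (rule finite_edges)
  have split: "Ssum L \<tau> = sum (?f \<tau>) ?Ez + sum (?f \<tau>) (?E - ?Ez)" for \<tau>
    unfolding Ssum_def using fin by (metis (no_types, lifting) mem_Collect_eq subsetI sum.subset_diff add.commute)
  have rest: "sum (?f (flip \<sigma> z)) (?E - ?Ez) = sum (?f \<sigma>) (?E - ?Ez)"
  proof (rule sum.cong[OF refl])
    fix e assume "e \<in> ?E - ?Ez"
    then have "z \<notin> e" by auto
    then show "?f (flip \<sigma> z) e = ?f \<sigma> e" unfolding flip_def by (intro prod.cong) auto
  qed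
  have fz: "?f \<tau> {z, w} = real_of_int (\<tau> z) * real_of_int (\<tau> w)" if "w \<in> Nb L z" for \<tau> w
  proof -
    have "w \<noteq> z" using that adj_irrefl[of L z] unfolding Nb_def by auto
    then show ?thesis by simp
  qed
  have ez: "sum (?f \<tau>) ?Ez = (\<Sum>w\<in>Nb L z. real_of_int (\<tau> z) * real_of_int (\<tau> w))" for \<tau>
    unfolding Ez_eq sum.reindex[OF inj_pair] using fz by simp
  have fl: "real_of_int (flip \<sigma> z z) * real_of_int (flip \<sigma> z w) = - (real_of_int (\<sigma> z) * real_of_int (\<sigma> w))"
    if "w \<in> Nb L z" for w
  proof -
    have "w \<noteq> z" using that adj_irrefl[of L z] unfolding Nb_def by auto
    then show ?thesis unfolding flip_def by simp
  qed
  have "sum (?f (flip \<sigma> z)) ?Ez = - (\<Sum>w\<in>Nb L z. real_of_int (\<sigma> z) * real_of_int (\<sigma> w))"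
    unfolding ez using fl by (simp add: sum_negf)
  then show ?thesis unfolding split[of "flip \<sigma> z"] split[of \<sigma>] rest ez by simp
qed

lemma sum_flip:
  assumes z: "z \<in> Lam L"
  shows "(\<Sum>i\<in>Lam L. real_of_int (flip \<sigma> z i)) - (\<Sum>i\<in>Lam L. real_of_int (\<sigma> i)) = - 2 * real_of_int (\<sigma> z)"
proof -
  have "(\<Sum>i\<in>Lam L. real_of_int (flip \<sigma> z i)) = real_of_int (flip \<sigma> z z) + (\<Sum>i\<in>Lam L - {z}. real_of_int (flip \<sigma> z i))"
    using z finite_Lam by (simp add: sum.remove)
  moreover have "(\<Sum>i\<in>Lam L. real_of_int (\<sigma> i)) = real_of_int (\<sigma> z) + (\<Sum>i\<in>Lam L - {z}. real_of_int (\<sigma> i))"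
    using z finite_Lam by (simp add: sum.remove)
  moreover have "(\<Sum>i\<in>Lam L - {z}. real_of_int (flip \<sigma> z i)) = (\<Sum>i\<in>Lam L - {z}. real_of_int (\<sigma> i))"
    unfolding flip_def by (intro sum.cong) auto
  ultimately show ?thesis unfolding flip_def by simp
qed

lemma Ham_flip_Nb:
  assumes z: "z \<in> Lam L"
  shows "Ham L J h (flip \<sigma> z) - Ham L J h \<sigma> = real_of_int (\<sigma> z) * (J * (\<Sum>w\<in>Nb L z. real_of_int (\<sigma> w)) + h)"
proof -
  have "Ham L J h (flip \<sigma> z) - Ham L J h \<sigma> = - (J/2) * (Ssum L (flip \<sigma> z) - Ssum L \<sigma>)
     - (h/2) * ((\<Sum>i\<in>Lam L. real_of_int (flip \<sigma> z i)) - (\<Sum>i\<in>Lam L. real_of_int (\<sigma> i)))"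
    unfolding Ham_def Ssum_def by (simp add: algebra_simps)
  also have "\<dots> = J * (\<Sum>w\<in>Nb L z. real_of_int (\<sigma> z) * real_of_int (\<sigma> w)) + h * real_of_int (\<sigma> z)"
    unfolding Ssum_flip[OF z] sum_flip[OF z] by simp
  also have "\<dots> = real_of_int (\<sigma> z) * (J * (\<Sum>w\<in>Nb L z. real_of_int (\<sigma> w)) + h)"
    by (simp add: sum_distrib_left algebra_simps)
  finally show ?thesis .
qed

lemma Nb_pr: "L \<ge> 2 \<Longrightarrow> Nb L (pr L x) = set (map (pr L) (nbs x))"
  unfolding Nb_def using adj_pr[of L x] by (simp add: set_eq_iff)

lemma Ham_flip:
  assumes L: "L \<ge> 2"
  shows "Ham L J h (flip \<sigma> (pr L x)) - Ham L J h \<sigma> =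
     real_of_int (\<sigma> (pr L x)) * (J * real_of_int (sum_list (map (\<sigma> \<circ> pr L) (nbs x))) + h)"
proof -
  have z: "pr L x \<in> Lam L" using L pr_Lam by simp
  have "(\<Sum>w\<in>Nb L (pr L x). real_of_int (\<sigma> w)) = sum_list (map (\<lambda>w. real_of_int (\<sigma> w)) (map (pr L) (nbs x)))"
    unfolding Nb_pr[OF L] by (rule sum.distinct_set_conv_list[OF distinct_nbs[OF L]])
  also have "\<dots> = real_of_int (sum_list (map (\<sigma> \<circ> pr L) (nbs x)))"
    by (simp add: sum_list_of_int[symmetric] o_def)
  finally show ?thesis using Ham_flip_Nb[OF z] by simp
qed



lemma finite_conf: "finite (conf L)"
proof -
  have "finite {f. \<forall>x. (x \<in> Lam L \<longrightarrow> f x \<in> {-1,1::int}) \<and> (x \<notin> Lam L \<longrightarrow> f x = 0)}"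
    by (rule finite_set_of_finite_funs[OF finite_Lam]) simp
  then show ?thesis unfolding conf_def .
qed

definition cost :: "real \<Rightarrow> real \<Rightarrow> (face \<Rightarrow> int) \<Rightarrow> face \<Rightarrow> real" where
  "cost J h s x = real_of_int (s x) * (J * real_of_int (sum_list (map s (nbs x))) + h)"

definition cf :: "nat \<Rightarrow> (face \<Rightarrow> int) \<Rightarrow> face \<Rightarrow> face \<Rightarrow> int" where
  "cf L s x = (\<lambda>y. if pr L y = pr L x then - s y else s y)"

fun gp :: "nat \<Rightarrow> real \<Rightarrow> real \<Rightarrow> real \<Rightarrow> (face \<Rightarrow> int) \<Rightarrow> face list \<Rightarrow> bool" where
  "gp L J h e s [] = (e < 0)"
| "gp L J h e s (x # xs) = (e + cost J h s x \<le> 2 * J \<and> gp L J h (e + cost J h s x) (cf L s x) xs)"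

lemma flip_conf: "\<sigma> \<in> conf L \<Longrightarrow> z \<in> Lam L \<Longrightarrow> flip \<sigma> z \<in> conf L"
  unfolding conf_def flip_def by auto

lemma cf_flip: "(flip \<sigma> (pr L x)) \<circ> pr L = cf L (\<sigma> \<circ> pr L) x"
  unfolding cf_def flip_def by (auto simp: fun_eq_iff)

lemma gp_path:
  assumes L: "L \<ge> 2"
  shows "gp L J h e (\<sigma> \<circ> pr L) xs \<Longrightarrow> \<sigma> \<in> conf L \<Longrightarrow> e \<le> 2 * J \<Longrightarrow>
    \<exists>\<omega> \<eta>. \<omega> \<in> paths L \<sigma> \<eta> \<and> (\<forall>\<tau>\<in>set \<omega>. Ham L J h \<tau> - Ham L J h \<sigma> + e \<le> 2 * J) \<and> Ham L J h \<eta> - Ham L J h \<sigma> + e < 0"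
proof (induction xs arbitrary: \<sigma> e)
  case Nil
  then show ?case
    by (intro exI[of _ "[\<sigma>]"] exI[of _ \<sigma>]) (auto simp: paths_def is_path_def)
next
  case (Cons x xs)
  let ?z = "pr L x"
  let ?\<sigma>' = "flip \<sigma> ?z"
  have z: "?z \<in> Lam L" using L pr_Lam by simp
  have c: "Ham L J h ?\<sigma>' - Ham L J h \<sigma> = cost J h (\<sigma> \<circ> pr L) x"
    unfolding Ham_flip[OF L] cost_def by (simp add: o_def)
  let ?e' = "e + cost J h (\<sigma> \<circ> pr L) x"
  have g: "gp L J h ?e' (?\<sigma>' \<circ> pr L) xs" and e': "?e' \<le> 2 * J"
    using Cons.prems(1) unfolding cf_flip by (simp_all del: comp_apply add: comp_def)
  have conf': "?\<sigma>' \<in> conf L" using flip_conf[OF Cons.prems(2) z] .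
  obtain \<omega> \<eta> where w: "\<omega> \<in> paths L ?\<sigma>' \<eta>" "\<forall>\<tau>\<in>set \<omega>. Ham L J h \<tau> - Ham L J h ?\<sigma>' + ?e' \<le> 2 * J"
      "Ham L J h \<eta> - Ham L J h ?\<sigma>' + ?e' < 0"
    using Cons.IH[OF g conf' e'] by blast
  have p: "is_path L \<omega>" "hd \<omega> = ?\<sigma>'" "last \<omega> = \<eta>" using w(1) unfolding paths_def by auto
  have ne: "\<omega> \<noteq> []" using p(1) unfolding is_path_def by auto
  have "is_path L (\<sigma> # \<omega>)"
    unfolding is_path_def
  proof (intro conjI allI impI)
    show "\<sigma> # \<omega> \<noteq> []" by simp
    show "set (\<sigma> # \<omega>) \<subseteq> conf L" using Cons.prems(2) p(1) unfolding is_path_def by auto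
    fix k assume k: "Suc k < length (\<sigma> # \<omega>)"
    show "\<exists>x\<in>Lam L. (\<sigma> # \<omega>) ! Suc k = flip ((\<sigma> # \<omega>) ! k) x"
    proof (cases k)
      case 0
      then show ?thesis using z p(2) ne by (auto simp: hd_conv_nth)
    next
      case (Suc k')
      then show ?thesis using p(1) k unfolding is_path_def by auto
    qed
  qed
  then have "\<sigma> # \<omega> \<in> paths L \<sigma> \<eta>" using p ne unfolding paths_def by auto
  moreover have "\<forall>\<tau>\<in>set (\<sigma> # \<omega>). Ham L J h \<tau> - Ham L J h \<sigma> + e \<le> 2 * J"
    using w(2) c Cons.prems(3) by auto
  moreover have "Ham L J h \<eta> - Ham L J h \<sigma> + e < 0" using w(3) c by auto
  ultimately show ?case by blast
qed

lemma stab_le: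
  assumes conf: "\<sigma> \<in> conf L" and w: "\<omega> \<in> paths L \<sigma> \<eta>"
    and bd: "\<forall>\<tau>\<in>set \<omega>. Ham L J h \<tau> \<le> Ham L J h \<sigma> + B" and low: "Ham L J h \<eta> < Ham L J h \<sigma>"
  shows "stab L J h \<sigma> \<le> ereal B"
proof -
  have p: "is_path L \<omega>" "hd \<omega> = \<sigma>" "last \<omega> = \<eta>" using w unfolding paths_def by auto
  have sub: "set \<omega> \<subseteq> conf L" "\<omega> \<noteq> []" using p(1) unfolding is_path_def by auto
  have eta: "\<eta> \<in> conf L" using sub p(3) by auto
  then have I: "\<eta> \<in> Iset L J h \<sigma>" using low unfolding Iset_def by auto
  let ?F = "\<lambda>\<omega>. Max (Ham L J h ` set \<omega>)"
  have Fsub: "?F ` paths L \<sigma> \<eta> \<subseteq> Ham L J h ` conf L"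
  proof
    fix y assume "y \<in> ?F ` paths L \<sigma> \<eta>"
    then obtain \<omega>' where "\<omega>' \<in> paths L \<sigma> \<eta>" "y = ?F \<omega>'" by auto
    then have "set \<omega>' \<subseteq> conf L" "\<omega>' \<noteq> []" unfolding paths_def is_path_def by auto
    moreover have "?F \<omega>' \<in> Ham L J h ` set \<omega>'" using \<open>\<omega>' \<noteq> []\<close> by (intro Max_in) auto
    ultimately show "y \<in> Ham L J h ` conf L" using \<open>y = ?F \<omega>'\<close> by blast
  qed
  have finF: "finite (?F ` paths L \<sigma> \<eta>)" using finite_subset[OF Fsub] finite_conf by auto
  have "Phi L J h \<sigma> \<eta> \<le> ?F \<omega>"
    unfolding Phi_def using finF w by (intro Min_le) auto
  also have "?F \<omega> \<le> Ham L J h \<sigma> + B"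
    using bd sub by (subst Max_le_iff) auto
  finally have phi: "Phi L J h \<sigma> \<eta> \<le> Ham L J h \<sigma> + B" .
  have finS: "finite {Phi L J h \<sigma>' \<eta>' | \<sigma>' \<eta>'. \<sigma>' \<in> {\<sigma>} \<and> \<eta>' \<in> Iset L J h \<sigma>}"
  proof -
    have "{Phi L J h \<sigma>' \<eta>' | \<sigma>' \<eta>'. \<sigma>' \<in> {\<sigma>} \<and> \<eta>' \<in> Iset L J h \<sigma>} = Phi L J h \<sigma> ` Iset L J h \<sigma>" by auto
    moreover have "finite (Iset L J h \<sigma>)" using finite_conf unfolding Iset_def by auto
    ultimately show ?thesis by simp
  qed
  have "PhiSet L J h {\<sigma>} (Iset L J h \<sigma>) \<le> Phi L J h \<sigma> \<eta>"
    unfolding PhiSet_def using finS I by (intro Min_le) auto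
  with phi have "PhiSet L J h {\<sigma>} (Iset L J h \<sigma>) - Ham L J h \<sigma> \<le> B" by simp
  then show ?thesis unfolding stab_def using I by auto
qed

lemma gp_stab:
  assumes L: "L \<ge> 2" and conf: "\<sigma> \<in> conf L" and g: "gp L J h 0 (\<sigma> \<circ> pr L) xs" and J: "J \<ge> 0"
  shows "stab L J h \<sigma> \<le> ereal (2 * J)"
proof -
  obtain \<omega> \<eta> where "\<omega> \<in> paths L \<sigma> \<eta>" "\<forall>\<tau>\<in>set \<omega>. Ham L J h \<tau> - Ham L J h \<sigma> + 0 \<le> 2 * J"
     "Ham L J h \<eta> - Ham L J h \<sigma> + 0 < 0"
    using gp_path[OF L g conf] J by auto
  then show ?thesis by (intro stab_le[OF conf]) auto
qed



fun R :: "face \<Rightarrow> face" where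
  "R (u,v,True) = (-v-1, u+v, False)"
| "R (u,v,False) = (-v-1, u+v+1, True)"

fun Tr :: "int \<Rightarrow> int \<Rightarrow> face \<Rightarrow> face" where
  "Tr a b (u,v,t) = (u+a, v+b, t)"

definition autom :: "nat \<Rightarrow> (face \<Rightarrow> face) \<Rightarrow> bool" where
  "autom L g \<longleftrightarrow> (\<forall>x. mset (nbs (g x)) = mset (map g (nbs x))) \<and> (\<forall>x y. pr L (g x) = pr L (g y) \<longleftrightarrow> pr L x = pr L y)"

lemma pr_eq_dvd: "L \<ge> 1 \<Longrightarrow> pr L (u,v,t) = pr L (u',v',t') \<longleftrightarrow> int L dvd (u - u') \<and> int L dvd (v - v') \<and> t = t'"
  by (simp add: pr_eq_iff mod_eq_dvd_iff)

lemma dvd_aux1: "(n::int) dvd (-v-1) - (-v'-1) \<longleftrightarrow> n dvd (v - v')"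
proof -
  have "(-v-1) - (-v'-1) = - (v - v')" by simp
  then show ?thesis by (simp only: dvd_minus_iff)
qed

lemma dvd_aux2: "(n::int) dvd (v - v') \<Longrightarrow> n dvd ((u+v+c) - (u'+v'+c)) \<longleftrightarrow> n dvd (u - u')"
proof -
  assume "n dvd (v - v')"
  moreover have "(u+v+c) - (u'+v'+c) = (u - u') + (v - v')" by simp
  ultimately show ?thesis by (metis dvd_add_left_iff)
qed

lemma mset_nbs_R: "mset (nbs (R x)) = mset (map R (nbs x))"
proof -
  obtain u v t where x: "x = (u,v,t)" by (cases x)
  show ?thesis unfolding x by (cases t) (auto simp: add_mset_commute algebra_simps)
qed

lemma pr_R: "L \<ge> 1 \<Longrightarrow> pr L (R x) = pr L (R y) \<longleftrightarrow> pr L x = pr L y"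
proof -
  assume L: "L \<ge> 1"
  obtain u v t where x: "x = (u,v,t)" by (cases x)
  obtain u' v' t' where y: "y = (u',v',t')" by (cases y)
  have A: "int L dvd ((u+v+0) - (u'+v'+0)) \<and> int L dvd (-v-1) - (-v'-1) \<longleftrightarrow> int L dvd (u - u') \<and> int L dvd (v - v')"
    using dvd_aux1 dvd_aux2 by blast
  have B: "int L dvd ((u+v+1) - (u'+v'+1)) \<and> int L dvd (-v-1) - (-v'-1) \<longleftrightarrow> int L dvd (u - u') \<and> int L dvd (v - v')"
    using dvd_aux1 dvd_aux2 by blast
  show ?thesis unfolding x y using L A B
    by (cases t; cases t') (simp_all add: pr_eq_dvd conj_commute)
qed

lemma autom_R: "L \<ge> 1 \<Longrightarrow> autom L R"
  unfolding autom_def using mset_nbs_R pr_R by blast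

lemma autom_Tr: "L \<ge> 1 \<Longrightarrow> autom L (Tr a b)"
  unfolding autom_def
proof (intro conjI allI)
  fix x :: face
  obtain u v t where x: "x = (u,v,t)" by (cases x)
  show "mset (nbs (Tr a b x)) = mset (map (Tr a b) (nbs x))"
    unfolding x by (cases t) (auto simp: algebra_simps)
next
  fix x y :: face assume L: "L \<ge> 1"
  obtain u v t where x: "x = (u,v,t)" by (cases x)
  obtain u' v' t' where y: "y = (u',v',t')" by (cases y)
  have "(u + a) - (u' + a) = u - u'" "(v + b) - (v' + b) = v - v'" by simp_all
  then show "pr L (Tr a b x) = pr L (Tr a b y) \<longleftrightarrow> pr L x = pr L y"
    unfolding x y using L by (simp add: pr_eq_dvd)
qed

lemma autom_nbs: "autom L f \<Longrightarrow> mset (nbs (f x)) = mset (map f (nbs x))"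
  unfolding autom_def by blast

lemma autom_pr: "autom L f \<Longrightarrow> pr L (f x) = pr L (f y) \<longleftrightarrow> pr L x = pr L y"
  unfolding autom_def by blast

lemma autom_comp: "autom L f \<Longrightarrow> autom L g \<Longrightarrow> autom L (f \<circ> g)"
proof -
  assume f: "autom L f" and g: "autom L g"
  have "mset (nbs (f (g x))) = mset (map (f \<circ> g) (nbs x))" for x
  proof -
    have "mset (nbs (f (g x))) = image_mset f (mset (nbs (g x)))" using autom_nbs[OF f] by simp
    also have "\<dots> = image_mset f (image_mset g (mset (nbs x)))" using autom_nbs[OF g] by simp
    also have "\<dots> = mset (map (f \<circ> g) (nbs x))" by (simp add: multiset.map_comp)
    finally show ?thesis .
  qed
  moreover have "pr L (f (g x)) = pr L (f (g y)) \<longleftrightarrow> pr L x = pr L y" for x y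
    using autom_pr[OF f] autom_pr[OF g] by simp
  ultimately show ?thesis unfolding autom_def by simp
qed



definition pmt :: "(face \<Rightarrow> int) \<Rightarrow> bool" where
  "pmt t \<longleftrightarrow> (\<forall>y. t y = 1 \<or> t y = -1)"

definition nsum :: "(face \<Rightarrow> int) \<Rightarrow> face \<Rightarrow> int" where
  "nsum t x = sum_list (map t (nbs x))"

definition loc_ok :: "(face \<Rightarrow> int) \<Rightarrow> bool" where
  "loc_ok t \<longleftrightarrow> (\<forall>x. t x = 1 \<longrightarrow> nsum t x \<ge> 1) \<and> (\<forall>x. t x = -1 \<longrightarrow> nsum t x \<le> -1) \<and>
     (\<forall>x y. y \<in> set (nbs x) \<longrightarrow> t x = -1 \<longrightarrow> t y = -1 \<longrightarrow> nsum t x \<ge> -1 \<longrightarrow> nsum t y \<ge> -1 \<longrightarrow> False)"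

lemma nsum_up: "nsum t (u,v,True) = t (u,v,False) + t (u,v-1,False) + t (u-1,v,False)"
  unfolding nsum_def by simp
lemma nsum_down: "nsum t (u,v,False) = t (u,v,True) + t (u,v+1,True) + t (u+1,v,True)"
  unfolding nsum_def by simp

lemma sum_list_mset_map: "sum_list (map u xs) = sum_mset (image_mset u (mset xs))"
  by (metis mset_map sum_mset_sum_list)

lemma nsum_autom: "autom L g \<Longrightarrow> nsum t (g x) = nsum (t \<circ> g) x"
proof -
  assume g: "autom L g"
  have "nsum t (g x) = sum_mset (image_mset t (mset (nbs (g x))))" unfolding nsum_def sum_list_mset_map ..
  also have "\<dots> = sum_mset (image_mset t (image_mset g (mset (nbs x))))" using autom_nbs[OF g] by simp
  also have "\<dots> = nsum (t \<circ> g) x" unfolding nsum_def sum_list_mset_map by (simp add: multiset.map_comp)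
  finally show ?thesis .
qed

lemma nbs_autom: "autom L g \<Longrightarrow> y \<in> set (nbs x) \<Longrightarrow> g y \<in> set (nbs (g x))"
proof -
  assume g: "autom L g" and y: "y \<in> set (nbs x)"
  have "set_mset (mset (nbs (g x))) = set_mset (mset (map g (nbs x)))" using autom_nbs[OF g] by simp
  then show ?thesis using y by simp
qed

lemma pmt_comp: "pmt t \<Longrightarrow> pmt (t \<circ> g)"
  unfolding pmt_def o_def by blast

lemma loc_ok_p: "loc_ok t \<Longrightarrow> t x = 1 \<Longrightarrow> nsum t x \<ge> 1" unfolding loc_ok_def by blast
lemma loc_ok_m: "loc_ok t \<Longrightarrow> t x = -1 \<Longrightarrow> nsum t x \<le> -1" unfolding loc_ok_def by blast
lemma loc_ok_nr: "loc_ok t \<Longrightarrow> y \<in> set (nbs x) \<Longrightarrow> t x = -1 \<Longrightarrow> t y = -1 \<Longrightarrow> nsum t x \<ge> -1 \<Longrightarrow> nsum t y \<ge> -1 \<Longrightarrow> False"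
  unfolding loc_ok_def by blast

lemma loc_ok_autom: "loc_ok t \<Longrightarrow> autom L g \<Longrightarrow> loc_ok (t \<circ> g)"
proof -
  assume ok: "loc_ok t" and g: "autom L g"
  have n: "nsum (t \<circ> g) x = nsum t (g x)" for x using nsum_autom[OF g] by simp
  show ?thesis unfolding loc_ok_def n
  proof (intro conjI allI impI)
    fix x assume "(t \<circ> g) x = 1" then show "1 \<le> nsum t (g x)" using loc_ok_p[OF ok] by simp
  next
    fix x assume "(t \<circ> g) x = -1" then show "nsum t (g x) \<le> -1" using loc_ok_m[OF ok] by simp
  next
    fix x y assume "y \<in> set (nbs x)" "(t \<circ> g) x = -1" "(t \<circ> g) y = -1" "-1 \<le> nsum t (g x)" "-1 \<le> nsum t (g y)"
    moreover have "g y \<in> set (nbs (g x))" using nbs_autom[OF g] \<open>y \<in> set (nbs x)\<close> .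
    ultimately show False using loc_ok_nr[OF ok] by (metis comp_apply)
  qed
qed

lemma pm_cases: "pmt t \<Longrightarrow> t y = 1 \<or> t y = -1" unfolding pmt_def by blast

lemma std_facts:
  assumes pm: "pmt t" and ok: "loc_ok t" and a: "t (0,0,True) = 1" and b: "t (0,-1,False) = -1"
  shows "t (0,-1,True) = -1" "t (1,-1,True) = -1" "t (1,-1,False) = -1" "t (1,-2,False) = -1"
    "t (0,0,False) = 1" "t (-1,0,False) = 1"
proof -
  have m: "nsum t (0,-1,False) \<le> -1" using ok b unfolding loc_ok_def by blast
  then have "t (0,-1,True) + t (0,0,True) + t (1,-1,True) \<le> -1" by (simp add: nsum_down)
  then show c1: "t (0,-1,True) = -1" and c2: "t (1,-1,True) = -1"
    using a pm_cases[OF pm, of "(0,-1,True)"] pm_cases[OF pm, of "(1,-1,True)"] by auto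
  have "nsum t (0,-1,False) \<ge> -1" using c1 c2 a by (simp add: nsum_down)
  moreover have "(0,-1,False) \<in> set (nbs (1,-1,True))" by simp
  ultimately have "\<not> nsum t (1,-1,True) \<ge> -1" using ok c2 b unfolding loc_ok_def by blast
  then have "t (1,-1,False) + t (1,-2,False) + t (0,-1,False) < -1" by (simp add: nsum_up)
  then show "t (1,-1,False) = -1" "t (1,-2,False) = -1"
    using b pm_cases[OF pm, of "(1,-1,False)"] pm_cases[OF pm, of "(1,-2,False)"] by auto
  have "nsum t (0,0,True) \<ge> 1" using ok a unfolding loc_ok_def by blast
  then have "t (0,0,False) + t (0,-1,False) + t (-1,0,False) \<ge> 1" by (simp add: nsum_up)
  then show "t (0,0,False) = 1" "t (-1,0,False) = 1"
    using b pm_cases[OF pm, of "(0,0,False)"] pm_cases[OF pm, of "(-1,0,False)"] by auto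
qed

lemma Tr_apply: "(t \<circ> Tr a b) (u,v,c) = t (u+a, v+b, c)" by simp

lemma std_facts_at:
  assumes pm: "pmt t" and ok: "loc_ok t" and L: "(L::nat) \<ge> 1"
    and a: "t (k,0,True) = 1" and b: "t (k,-1,False) = -1"
  shows "t (k,-1,True) = -1" "t (k+1,-1,True) = -1" "t (k+1,-1,False) = -1" "t (k+1,-2,False) = -1"
    "t (k,0,False) = 1" "t (k-1,0,False) = 1"
proof -
  have pm': "pmt (t \<circ> Tr k 0)" by (rule pmt_comp[OF pm])
  have ok': "loc_ok (t \<circ> Tr k 0)" by (rule loc_ok_autom[OF ok autom_Tr[OF L]])
  note F = std_facts[OF pm' ok']
  show "t (k,-1,True) = -1" "t (k+1,-1,True) = -1" "t (k+1,-1,False) = -1" "t (k+1,-2,False) = -1"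
    "t (k,0,False) = 1" "t (k-1,0,False) = 1"
    using F a b by (simp_all add: add.commute)
qed

lemma walk:
  assumes pm: "pmt t" and ok: "loc_ok t" and L: "(L::nat) \<ge> 1"
    and a: "t (0,0,True) = 1" and b: "t (0,-1,False) = -1"
    and st: "\<forall>k::int. 1 \<le> k \<and> k \<le> n \<longrightarrow> t (k,0,True) = 1"
  shows "\<forall>k::int. 0 \<le> k \<and> k \<le> n \<longrightarrow> t (k,0,True) = 1 \<and> t (k,-1,False) = -1"
proof -
  have "t (int i,0,True) = 1 \<and> t (int i,-1,False) = -1" if "int i \<le> n" for i :: nat
    using that
  proof (induction i)
    case 0 then show ?case using a b by simp
  next
    case (Suc i)
    then have IH: "t (int i,0,True) = 1 \<and> t (int i,-1,False) = -1" by simp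
    have "t (int i + 1,-1,False) = -1" using std_facts_at(3)[OF pm ok L] IH by blast
    moreover have "t (int (Suc i),0,True) = 1" using st Suc.prems by simp
    ultimately show ?case by (simp add: add.commute)
  qed
  then show ?thesis by (metis nonneg_int_cases)
qed



lemma gp_mono: "gp L J h e u xs \<Longrightarrow> e' \<le> e \<Longrightarrow> gp L J h e' u xs"
proof (induction xs arbitrary: e e' u)
  case Nil then show ?case by simp
next
  case (Cons x xs)
  then show ?case by auto
qed

lemma gp_step: "e + c \<le> 2 * J \<Longrightarrow> cost J h u x \<le> c \<Longrightarrow> gp L J h (e + c) (cf L u x) xs \<Longrightarrow> gp L J h e u (x # xs)"
  using gp_mono[of L J h "e + c" "cf L u x" xs "e + cost J h u x"] by auto

lemma cost_autom: "autom L g \<Longrightarrow> cost J h u (g x) = real_of_int (u (g x)) * (J * real_of_int (nsum (u \<circ> g) x) + h)"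
  unfolding cost_def using nsum_autom[of L g u x] by (simp add: nsum_def)

lemma pr_box:
  assumes L: "L \<ge> 1" and p: "pr L (u,v,t) = pr L (u',v',t')" and b: "\<bar>u - u'\<bar> < int L" "\<bar>v - v'\<bar> < int L"
  shows "(u,v,t) = (u',v',t')"
proof -
  have d: "int L dvd (u - u')" "int L dvd (v - v')" "t = t'" using p L by (auto simp: pr_eq_dvd)
  have "u - u' = 0"
  proof (rule ccontr)
    assume "u - u' \<noteq> 0"
    then have "\<bar>int L\<bar> \<le> \<bar>u - u'\<bar>" using d(1) by (rule dvd_imp_le_int)
    then show False using b by simp
  qed
  moreover have "v - v' = 0"
  proof (rule ccontr)
    assume "v - v' \<noteq> 0"
    then have "\<bar>int L\<bar> \<le> \<bar>v - v'\<bar>" using d(2) by (rule dvd_imp_le_int)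
    then show False using b by simp
  qed
  ultimately show ?thesis using d(3) by simp
qed

locale tor =
  fixes L :: nat and J h :: real and s :: "face \<Rightarrow> int"
  assumes L2: "L \<ge> 2" and hpos: "0 < h" and Jh: "2 * h \<le> J"
    and pm: "pmt s" and per: "\<And>x y. pr L x = pr L y \<Longrightarrow> s x = s y"
begin

lemma L1: "L \<ge> 1" using L2 by simp
lemma Jpos: "J > 0" using hpos Jh by simp

definition fs :: "face set \<Rightarrow> face \<Rightarrow> int" where
  "fs A = (\<lambda>y. if \<exists>a\<in>A. pr L a = pr L y then - s y else s y)"

lemma fs_empty: "fs {} = s" unfolding fs_def by simp

lemma cf_fs: "\<forall>a\<in>A. pr L a \<noteq> pr L x \<Longrightarrow> cf L (fs A) x = fs (insert x A)"
  unfolding cf_def fs_def by (auto simp: fun_eq_iff)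

lemma fs_in: "y \<in> A \<Longrightarrow> fs A y = - s y" unfolding fs_def by auto
lemma fs_out: "\<forall>a\<in>A. pr L a \<noteq> pr L y \<Longrightarrow> fs A y = s y" unfolding fs_def by auto
lemma s_pm: "s y = 1 \<or> s y = -1" using pm unfolding pmt_def by blast
lemma fs_le: "fs A y \<le> 1" unfolding fs_def using s_pm[of y] by auto
lemma fs_ge: "fs A y \<ge> -1" unfolding fs_def using s_pm[of y] by auto
lemma fs_shr: "\<forall>a\<in>A. s a = 1 \<Longrightarrow> s y = -1 \<Longrightarrow> fs A y = -1"
proof -
  assume a: "\<forall>a\<in>A. s a = 1" and y: "s y = -1"
  have "\<not> (\<exists>a\<in>A. pr L a = pr L y)"
  proof
    assume "\<exists>a\<in>A. pr L a = pr L y"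
    then obtain a where "a \<in> A" "pr L a = pr L y" by blast
    then have "s a = s y" using per by blast
    then show False using a y \<open>a \<in> A\<close> by auto
  qed
  then show ?thesis unfolding fs_def using y by simp
qed
lemma fs_gr: "\<forall>a\<in>A. s a = -1 \<Longrightarrow> s y = 1 \<Longrightarrow> fs A y = 1"
proof -
  assume a: "\<forall>a\<in>A. s a = -1" and y: "s y = 1"
  have "\<not> (\<exists>a\<in>A. pr L a = pr L y)"
  proof
    assume "\<exists>a\<in>A. pr L a = pr L y"
    then obtain a where "a \<in> A" "pr L a = pr L y" by blast
    then have "s a = s y" using per by blast
    then show False using a y \<open>a \<in> A\<close> by auto
  qed
  then show ?thesis unfolding fs_def using y by simp
qed
lemma fs_in_shr: "\<forall>a\<in>A. s a = 1 \<Longrightarrow> y \<in> A \<Longrightarrow> fs A y = -1"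
  using fs_in by auto
lemma fs_in_gr: "\<forall>a\<in>A. s a = -1 \<Longrightarrow> y \<in> A \<Longrightarrow> fs A y = 1"
  using fs_in by auto

lemma fs_val: "fs A y = s y \<or> fs A y = - s y" unfolding fs_def by auto

lemma cost_shr_bd:
  assumes g: "autom L g" and v: "u (g x) = 1" and n: "nsum (u \<circ> g) x \<le> k"
  shows "cost J h u (g x) \<le> J * k + h"
proof -
  have "J * real_of_int (nsum (u \<circ> g) x) \<le> J * k" using n Jpos by simp
  then show ?thesis unfolding cost_autom[OF g] v by simp
qed

lemma cost_gr_bd:
  assumes g: "autom L g" and v: "u (g x) = -1" and n: "nsum (u \<circ> g) x \<ge> k"
  shows "cost J h u (g x) \<le> - J * k - h"
proof -
  have "J * real_of_int (nsum (u \<circ> g) x) \<ge> J * k" using n Jpos by simp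
  then show ?thesis unfolding cost_autom[OF g] v by simp
qed

lemma pr_g_box:
  assumes g: "autom L g" and p: "pr L (g (u,v,t)) = pr L (g (u',v',t'))"
    and b: "\<bar>u - u'\<bar> < int L" "\<bar>v - v'\<bar> < int L"
  shows "(u,v,t) = (u',v',t')"
  using pr_box[OF L1 _ b] autom_pr[OF g] p by blast

end



definition prs :: "nat \<Rightarrow> nat \<Rightarrow> face list" where
  "prs n0 n1 = concat (map (\<lambda>k. [(int k,0,False), (int k+1,0,True)]) [n0..<n1])"

definition shr :: "nat \<Rightarrow> face list" where
  "shr m = (if m = 0 then [(-1,0,False)] else [(0,0,True), (-1,0,False)] @ prs 0 (m-1) @ [(int m - 1, 0, False)])"

definition Sset :: "nat \<Rightarrow> face set" where
  "Sset n = {(i,0,True) | i. 0 \<le> i \<and> i \<le> int n} \<union> {(i,0,False) | i. -1 \<le> i \<and> i < int n}"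

lemma prs_Cons: "n < n1 \<Longrightarrow> prs n n1 = [(int n,0,False), (int n+1,0,True)] @ prs (Suc n) n1"
  unfolding prs_def by (simp add: upt_conv_Cons)

lemma prs_Nil: "prs n n = []" unfolding prs_def by simp

lemma set_prs: "set (prs n0 n1) = {(int k,0,False) | k. n0 \<le> k \<and> k < n1} \<union> {(int k+1,0,True) | k. n0 \<le> k \<and> k < n1}"
  unfolding prs_def by auto

lemma set_shr: "m \<ge> 1 \<Longrightarrow> set (shr m) = {(i,0,True) | i. 0 \<le> i \<and> i \<le> int m - 1} \<union> {(i,0,False) | i. -1 \<le> i \<and> i \<le> int m - 1}"
proof -
  assume m: "m \<ge> 1"
  have a: "(i,0,True) \<in> set (shr m) \<longleftrightarrow> 0 \<le> i \<and> i \<le> int m - 1" for i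
  proof
    assume "(i,0,True) \<in> set (shr m)"
    then show "0 \<le> i \<and> i \<le> int m - 1" using m by (auto simp: shr_def set_prs)
  next
    assume i: "0 \<le> i \<and> i \<le> int m - 1"
    show "(i,0,True) \<in> set (shr m)"
    proof (cases "i = 0")
      case True then show ?thesis using m unfolding shr_def by simp
    next
      case False
      then have "(i,0,True) = (int (nat (i - 1)) + 1, 0, True)" "nat (i-1) < m - 1" using i by auto
      then show ?thesis using m by (simp add: shr_def set_prs; blast)
    qed
  qed
  have b: "(i,0,False) \<in> set (shr m) \<longleftrightarrow> -1 \<le> i \<and> i \<le> int m - 1" for i
  proof
    assume "(i,0,False) \<in> set (shr m)"
    then show "-1 \<le> i \<and> i \<le> int m - 1" using m by (auto simp: shr_def set_prs)
  next
    assume i: "-1 \<le> i \<and> i \<le> int m - 1"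
    show "(i,0,False) \<in> set (shr m)"
    proof (cases "i = -1 \<or> i = int m - 1")
      case True then show ?thesis using m unfolding shr_def by auto
    next
      case False
      then have "(i,0,False) = (int (nat i), 0, False)" "nat i < m - 1" using i by auto
      then show ?thesis using m by (simp add: shr_def set_prs; blast)
    qed
  qed
  have c: "x \<in> set (shr m) \<Longrightarrow> fst (snd x) = 0" for x using m by (auto simp: shr_def set_prs)
  show ?thesis
  proof (intro set_eqI iffI)
    fix x :: face assume x: "x \<in> set (shr m)"
    obtain i v t where xx: "x = (i,v,t)" by (cases x)
    then have "v = 0" using c[OF x] by simp
    then show "x \<in> {(i,0,True) | i. 0 \<le> i \<and> i \<le> int m - 1} \<union> {(i,0,False) | i. -1 \<le> i \<and> i \<le> int m - 1}"
      using a b x xx by (cases t) auto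
  next
    fix x :: face assume "x \<in> {(i,0,True) | i. 0 \<le> i \<and> i \<le> int m - 1} \<union> {(i,0,False) | i. -1 \<le> i \<and> i \<le> int m - 1}"
    then show "x \<in> set (shr m)" using a b by auto
  qed
qed

lemma set_shr0: "set (shr 0) = {(-1,0,False)}" unfolding shr_def by simp

context tor begin

lemma nocong:
  assumes g: "autom L g" and A: "\<forall>a\<in>A. pr L a \<noteq> pr L (g x)"
    and Z: "\<And>z. z \<in> Z \<Longrightarrow> z \<noteq> x \<and> \<bar>fst z - fst x\<bar> < int L \<and> \<bar>fst (snd z) - fst (snd x)\<bar> < int L"
  shows "\<forall>b\<in>A \<union> g ` Z. pr L b \<noteq> pr L (g x)"
proof
  fix b assume "b \<in> A \<union> g ` Z"
  then show "pr L b \<noteq> pr L (g x)"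
  proof
    assume "b \<in> A" then show ?thesis using A by blast
  next
    assume "b \<in> g ` Z"
    then obtain z where z: "z \<in> Z" "b = g z" by blast
    obtain u v t where zz: "z = (u,v,t)" by (cases z)
    obtain u' v' t' where xx: "x = (u',v',t')" by (cases x)
    show ?thesis
    proof
      assume "pr L b = pr L (g x)"
      then have "(u,v,t) = (u',v',t')" using pr_g_box[OF g, of u v t u' v' t'] Z[OF z(1)] z(2) zz xx by auto
      then show False using Z[OF z(1)] zz xx by auto
    qed
  qed
qed

lemma fs_mi: "\<forall>b\<in>B. s b = 1 \<Longrightarrow> s y = -1 \<or> y \<in> B \<Longrightarrow> fs B y = -1"
  using fs_shr fs_in_shr by blast

end



context tor begin

lemma SR:
  assumes g: "autom L g" and box: "int m + 2 \<le> int L"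
   and Aplus: "\<forall>a\<in>A. s a = 1"
   and Adisj: "\<forall>a\<in>A. \<forall>x\<in>set (shr m). pr L a \<noteq> pr L (g x)"
   and P1: "\<forall>k::int. 0 \<le> k \<and> k < int m \<longrightarrow> s (g (k,0,True)) = 1"
   and P2: "\<forall>k::int. 0 \<le> k \<and> k < int m \<longrightarrow> s (g (k,0,False)) = 1"
   and P3: "s (g (-1,0,False)) = 1"
   and M1: "\<forall>k::int. 0 \<le> k \<and> k < int m \<longrightarrow> s (g (k,-1,False)) = -1"
   and M2: "s (g (-1,0,True)) = -1 \<or> g (-1,0,True) \<in> A"
   and M3: "s (g (int m,0,True)) = -1 \<or> g (int m,0,True) \<in> A"
   and E1: "e \<le> 2*J" and E2: "m \<ge> 1 \<longrightarrow> e + J + (2*real m-1)*h \<le> 2*J"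
   and C: "gp L J h (e + (2*real m+1)*h - J) (fs (A \<union> g ` set (shr m))) ys"
  shows "gp L J h e (fs A) (map g (shr m) @ ys)"
proof (cases "m = 0")
  case True
  let ?x = "(-1::int,0::int,False)"
  have v: "fs A (g ?x) = 1" using fs_out[of A "g ?x"] P3 Adisj True by (simp add: shr_def)
  have n: "nsum (fs A \<circ> g) ?x \<le> -1"
    using fs_mi[OF Aplus M2] fs_mi[OF Aplus] M3 True fs_le[of A "g (-1,1,True)"] by (simp add: nsum_down)
  have c: "cost J h (fs A) (g ?x) \<le> h - J" using cost_shr_bd[OF g v n] by simp
  have cf: "cf L (fs A) (g ?x) = fs (A \<union> g ` set (shr m))"
    using cf_fs[of A "g ?x"] Adisj True by (simp add: shr_def)
  have e1: "e + (h - J) \<le> 2 * J" using E1 hpos Jh by simp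
  have C': "gp L J h (e + (h - J)) (fs (A \<union> g ` set (shr m))) ys" using C True by (simp add: algebra_simps)
  show ?thesis unfolding True shr_def
    apply (simp del: gp.simps)
    apply (rule gp_step[where c = "h - J"])
    using e1 c apply (simp_all del: gp.simps)
    using C' cf True by simp
next
  case False
  then have m1: "m \<ge> 1" by simp
  have Sfin: "set (shr m) = Sset (m-1) \<union> {(int m - 1, 0, False)}"
    unfolding set_shr[OF m1] Sset_def using m1 by auto
  define B where "B n = A \<union> g ` Sset n" for n
  have Splus: "s (g z) = 1" if "z \<in> Sset n" "n \<le> m - 1" for z n
  proof -
    have "(\<exists>i. z = (i,0,True) \<and> 0 \<le> i \<and> i \<le> int n) \<or> (\<exists>i. z = (i,0,False) \<and> -1 \<le> i \<and> i < int n)"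
      using that(1) unfolding Sset_def by blast
    then show ?thesis
    proof
      assume "\<exists>i. z = (i,0,True) \<and> 0 \<le> i \<and> i \<le> int n"
      then show ?thesis using P1 that(2) m1 by auto
    next
      assume "\<exists>i. z = (i,0,False) \<and> -1 \<le> i \<and> i < int n"
      then obtain i where i: "z = (i,0,False)" "-1 \<le> i" "i < int n" by blast
      show ?thesis
      proof (cases "i = -1")
        case True then show ?thesis using i P3 by simp
      next
        case False then show ?thesis using i P2 that(2) m1 by auto
      qed
    qed
  qed
  have Bplus: "\<forall>b\<in>B n. s b = 1" if "n \<le> m - 1" for n
    unfolding B_def using Aplus Splus that by blast
  have inS: "Sset n \<subseteq> set (shr m)" if "n \<le> m - 1" for n
    unfolding set_shr[OF m1] Sset_def using that m1 by auto
  have pairs: "gp L J h e' (fs (B n)) (map g (prs n (m-1)) @ [g (int m - 1, 0, False)] @ ys)"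
    if "n \<le> m - 1" "e' \<le> e + 2*h + 2*real n*h" for n e'
    using that
  proof (induction n arbitrary: e' rule: inc_induct)
    case base
    let ?x = "(int m - 1, 0::int, False)"
    have xin: "?x \<in> set (shr m)" unfolding Sfin by simp
    have nc: "\<forall>b\<in>B (m-1). pr L b \<noteq> pr L (g ?x)"
      unfolding B_def
      by (rule nocong[OF g]) (use Adisj xin box m1 in \<open>auto simp: Sset_def of_nat_diff\<close>)
    have v: "fs (B (m-1)) (g ?x) = 1" using fs_out[OF nc] P2 m1 by simp
    have up: "g (int m - 1, 0, True) \<in> B (m-1)" unfolding B_def Sset_def using m1 by force
    have M3': "s (g (int m,0,True)) = -1 \<or> g (int m,0,True) \<in> B (m-1)" using M3 unfolding B_def by auto
    have n: "nsum (fs (B (m-1)) \<circ> g) ?x \<le> -1"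
      using fs_mi[OF Bplus[of "m-1"], of "g (int m - 1, 0, True)"] up
        fs_mi[OF Bplus[of "m-1"] M3'] fs_le[of "B (m-1)" "g (int m - 1,1,True)"]
      by (simp add: nsum_down)
    have c: "cost J h (fs (B (m-1))) (g ?x) \<le> h - J" using cost_shr_bd[OF g v n] by simp
    have cf: "cf L (fs (B (m-1))) (g ?x) = fs (A \<union> g ` set (shr m))"
      using cf_fs[OF nc] unfolding B_def Sfin by simp
    have e2: "e' + (h - J) \<le> e + (2*real m+1)*h - J"
      using base.prems m1 by (simp add: algebra_simps of_nat_diff)
    have e3: "e + (2*real m+1)*h - J \<le> 2*J" using E2 m1 hpos Jh by (simp add: algebra_simps)
    have e4: "e' + (h - J) \<le> 2 * J" using e2 e3 by simp
    show ?case unfolding prs_Nil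
      apply (simp del: gp.simps)
      apply (rule gp_step[where c = "h - J"])
      using e4 c apply (simp_all del: gp.simps)
      using gp_mono[OF C e2] cf by simp
  next
    case (step n)
    let ?x = "(int n, 0::int, False)" and ?y = "(int n + 1, 0::int, True)"
    have xin: "?x \<in> set (shr m)" "?y \<in> set (shr m)" using step.hyps m1 unfolding set_shr[OF m1] by auto
    have nc1: "\<forall>b\<in>B n. pr L b \<noteq> pr L (g ?x)"
      unfolding B_def
      by (rule nocong[OF g]) (use Adisj xin box step.hyps m1 in \<open>auto simp: Sset_def of_nat_diff\<close>)
    have v1: "fs (B n) (g ?x) = 1" using fs_out[OF nc1] P2 step.hyps by simp
    have up: "g (int n, 0, True) \<in> B n" unfolding B_def Sset_def by force
    have n1: "nsum (fs (B n) \<circ> g) ?x \<le> 1"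
      using fs_mi[OF Bplus[of n], of "g (int n, 0, True)"] up step.hyps
        fs_le[of "B n" "g (int n,1,True)"] fs_le[of "B n" "g (int n+1,0,True)"]
      by (simp add: nsum_down)
    have c1: "cost J h (fs (B n)) (g ?x) \<le> J + h" using cost_shr_bd[OF g v1 n1] by simp
    have cf1: "cf L (fs (B n)) (g ?x) = fs (insert (g ?x) (B n))" using cf_fs[OF nc1] .
    let ?B' = "insert (g ?x) (B n)"
    have B'eq: "?B' = A \<union> g ` (insert ?x (Sset n))" unfolding B_def by auto
    have nc2: "\<forall>b\<in>?B'. pr L b \<noteq> pr L (g ?y)"
      unfolding B'eq
      by (rule nocong[OF g]) (use Adisj xin box step.hyps m1 in \<open>auto simp: Sset_def of_nat_diff\<close>)
    have v2: "fs ?B' (g ?y) = 1" using fs_out[OF nc2] P1 step.hyps by simp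
    have B'plus: "\<forall>b\<in>?B'. s b = 1" using Bplus[of n] step.hyps P2 by auto
    have n2: "nsum (fs ?B' \<circ> g) ?y \<le> -1"
      using fs_mi[OF B'plus, of "g ?x"] fs_mi[OF B'plus, of "g (int n+1,-1,False)"] M1 step.hyps
        fs_le[of "?B'" "g (int n+1,0,False)"]
      by (simp add: nsum_up)
    have c2: "cost J h (fs ?B') (g ?y) \<le> h - J" using cost_shr_bd[OF g v2 n2] by simp
    have cf2: "cf L (fs ?B') (g ?y) = fs (B (Suc n))" 
    proof -
      have SS: "Sset (Suc n) = insert ?y (insert ?x (Sset n))" unfolding Sset_def by auto
      have "insert (g ?y) ?B' = B (Suc n)" unfolding B_def SS by simp
      then show ?thesis using cf_fs[OF nc2] by simp
    qed
    have en: "real n + 1 \<le> real m - 1" using step.hyps m1 by linarith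
    have hh: "(2*real n + 3)*h \<le> (2*real m - 1)*h" using en hpos by (intro mult_right_mono) auto
    have q1: "e' + (J + h) \<le> e + J + (2*real n + 3)*h" using step.prems by (simp add: algebra_simps)
    have e1: "e' + (J + h) \<le> 2 * J" using q1 hh E2 m1 by linarith
    have e2: "e' + (J + h) + (h - J) \<le> 2 * J" using e1 Jh hpos by linarith
    have e3: "e' + (J + h) + (h - J) \<le> e + 2*h + 2*real (Suc n)*h"
      using step.prems by (simp add: algebra_simps)
    have IH: "gp L J h (e' + (J + h) + (h - J)) (fs (B (Suc n))) (map g (prs (Suc n) (m - 1)) @ [g (int m - 1, 0, False)] @ ys)"
      using step.IH[OF e3] .
    show ?case unfolding prs_Cons[OF step.hyps(2)]
      apply (simp del: gp.simps)
      apply (rule gp_step[where c = "J + h"])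
      using e1 c1 apply (simp_all del: gp.simps)
      unfolding cf1
      apply (rule gp_step[where c = "h - J"])
      using e2 c2 apply (simp_all del: gp.simps)
      unfolding cf2 using IH by simp
  qed
  let ?x = "(0::int, 0::int, True)" and ?y = "(-1::int, 0::int, False)"
  have xin: "?x \<in> set (shr m)" "?y \<in> set (shr m)" unfolding set_shr[OF m1] using m1 by auto
  have nc1: "\<forall>b\<in>A. pr L b \<noteq> pr L (g ?x)" using Adisj xin by blast
  have v1: "fs A (g ?x) = 1" using fs_out[OF nc1] P1 m1 by simp
  have n1: "nsum (fs A \<circ> g) ?x \<le> 1"
    using fs_mi[OF Aplus, of "g (0,-1,False)"] M1 m1 fs_le[of A "g (0,0,False)"] fs_le[of A "g (-1,0,False)"]
    by (simp add: nsum_up)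
  have c1: "cost J h (fs A) (g ?x) \<le> J + h" using cost_shr_bd[OF g v1 n1] by simp
  have cf1: "cf L (fs A) (g ?x) = fs (insert (g ?x) A)" using cf_fs[OF nc1] .
  have nc2: "\<forall>b\<in>insert (g ?x) A. pr L b \<noteq> pr L (g ?y)"
  proof -
    have "\<forall>b\<in>A \<union> g ` {?x}. pr L b \<noteq> pr L (g ?y)"
      by (rule nocong[OF g]) (use Adisj xin box in auto)
    then show ?thesis by simp
  qed
  have v2: "fs (insert (g ?x) A) (g ?y) = 1" using fs_out[OF nc2] P3 by simp
  have B1plus: "\<forall>b\<in>insert (g ?x) A. s b = 1" using Aplus P1 m1 by auto
  have n2: "nsum (fs (insert (g ?x) A) \<circ> g) ?y \<le> -1"
  proof -
    have M2': "s (g (-1,0,True)) = -1 \<or> g (-1,0,True) \<in> insert (g ?x) A" using M2 by auto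
    show ?thesis
      using fs_mi[OF B1plus M2'] fs_mi[OF B1plus, of "g ?x"] fs_le[of "insert (g ?x) A" "g (-1,1,True)"]
      by (simp add: nsum_down)
  qed
  have c2: "cost J h (fs (insert (g ?x) A)) (g ?y) \<le> h - J" using cost_shr_bd[OF g v2 n2] by simp
  have cf2: "cf L (fs (insert (g ?x) A)) (g ?y) = fs (B 0)"
  proof -
    have S0: "Sset 0 = {?x, ?y}"
    proof -
      have a: "(-1 \<le> i \<and> i < 0) \<longleftrightarrow> i = (-1::int)" for i by arith
      have b: "(0 \<le> i \<and> i \<le> 0) \<longleftrightarrow> i = (0::int)" for i by arith
      show ?thesis unfolding Sset_def by (simp only: of_nat_0 a b) blast
    qed
    have "insert (g ?y) (insert (g ?x) A) = B 0" unfolding B_def S0 by auto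
    then show ?thesis using cf_fs[OF nc2] by simp
  qed
  have hh: "1*h \<le> (2*real m - 1)*h" using m1 hpos by (intro mult_right_mono) auto
  have e1: "e + (J + h) \<le> 2 * J" using hh E2 m1 by linarith
  have e2: "e + (J + h) + (h - J) \<le> 2 * J" using e1 Jh hpos by linarith
  have P: "gp L J h (e + (J + h) + (h - J)) (fs (B 0)) (map g (prs 0 (m-1)) @ [g (int m - 1, 0, False)] @ ys)"
    using pairs[of 0] by simp
  show ?thesis
    unfolding shr_def using False
    apply (simp del: gp.simps)
    apply (rule gp_step[where c = "J + h"])
    using e1 c1 apply (simp_all del: gp.simps)
    unfolding cf1
    apply (rule gp_step[where c = "h - J"])
    using e2 c2 apply (simp_all del: gp.simps)
    unfolding cf2 using P by simp
qed

end



definition gps :: "nat \<Rightarrow> nat \<Rightarrow> face list" where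
  "gps n0 n1 = concat (map (\<lambda>k. [(int k+1,-1,True), (int k+1,-1,False)]) [n0..<n1])"

definition gr :: "nat \<Rightarrow> face list" where
  "gr j = (0,-1,False) # gps 0 (j-1)"

definition Gset :: "nat \<Rightarrow> face set" where
  "Gset n = {(i,-1,False) | i. 0 \<le> i \<and> i \<le> int n} \<union> {(i,-1,True) | i. 1 \<le> i \<and> i \<le> int n}"

lemma gps_Cons: "n < n1 \<Longrightarrow> gps n n1 = [(int n+1,-1,True), (int n+1,-1,False)] @ gps (Suc n) n1"
  unfolding gps_def by (simp add: upt_conv_Cons)

lemma gps_Nil: "gps n n = []" unfolding gps_def by simp

lemma Gset_Suc: "Gset (Suc n) = insert (int n+1,-1,False) (insert (int n+1,-1,True) (Gset n))"
  unfolding Gset_def by auto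

lemma Gset_0: "Gset 0 = {(0,-1,False)}"
proof -
  have a: "(0 \<le> i \<and> i \<le> 0) \<longleftrightarrow> i = (0::int)" for i by arith
  have b: "(1 \<le> i \<and> i \<le> 0) \<longleftrightarrow> False" for i :: int by arith
  show ?thesis unfolding Gset_def by (simp only: of_nat_0 a b) blast
qed

lemma set_gps: "set (gps n0 n1) = {(int k+1,-1,True) | k. n0 \<le> k \<and> k < n1} \<union> {(int k+1,-1,False) | k. n0 \<le> k \<and> k < n1}"
  unfolding gps_def by auto

lemma set_gr: "j \<ge> 1 \<Longrightarrow> set (gr j) = Gset (j - 1)"
proof (induction j rule: nat_induct_at_least)
  case base then show ?case by (simp add: gr_def gps_Nil Gset_0)
next
  case (Suc n)
  obtain n' where n': "n = Suc n'" using Suc.hyps by (cases n) auto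
  have "gps 0 n = gps 0 (n-1) @ [(int (n-1)+1,-1,True), (int (n-1)+1,-1,False)]"
    unfolding n' gps_def by simp
  then have "set (gr (Suc n)) = insert (int (n-1)+1,-1,False) (insert (int (n-1)+1,-1,True) (set (gr n)))"
    unfolding gr_def by auto
  also have "\<dots> = Gset n" using Suc.IH Gset_Suc[of "n-1"] Suc.hyps by simp
  finally show ?case by simp
qed

context tor begin

lemma fs_pl: "\<forall>b\<in>B. s b = -1 \<Longrightarrow> s y = 1 \<or> y \<in> B \<Longrightarrow> fs B y = 1"
  using fs_gr fs_in_gr by blast

lemma GR:
  assumes g: "autom L g" and box: "int j + 2 \<le> int L" and j1: "j \<ge> 1"
   and Aminus: "\<forall>a\<in>A. s a = -1"
   and Adisj: "\<forall>a\<in>A. \<forall>x\<in>set (gr j). pr L a \<noteq> pr L (g x)"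
   and P: "\<forall>k::int. 0 \<le> k \<and> k < int j \<longrightarrow> s (g (k,0,True)) = 1 \<or> g (k,0,True) \<in> A"
   and M: "\<forall>k::int. 0 \<le> k \<and> k < int j \<longrightarrow> s (g (k,-1,False)) = -1"
   and M': "\<forall>k::int. 1 \<le> k \<and> k < int j \<longrightarrow> s (g (k,-1,True)) = -1"
   and E: "e \<le> 2*h"
   and C: "gp L J h (e + J - (2*real j - 1)*h) (fs (A \<union> g ` set (gr j))) ys"
  shows "gp L J h e (fs A) (map g (gr j) @ ys)"
proof -
  define B where "B n = A \<union> g ` Gset n" for n
  have Gminus: "s (g z) = -1" if "z \<in> Gset n" "n \<le> j - 1" for z n
    using that M M' j1 unfolding Gset_def by auto
  have Bminus: "\<forall>b\<in>B n. s b = -1" if "n \<le> j - 1" for n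
    unfolding B_def using Aminus Gminus that by blast
  have inG: "Gset n \<subseteq> set (gr j)" if "n \<le> j - 1" for n
    unfolding set_gr[OF j1] Gset_def using that j1 by auto
  have pairs: "gp L J h e' (fs (B n)) (map g (gps n (j-1)) @ ys)"
    if "n \<le> j - 1" "e' \<le> e + J - h - 2*real n*h" for n e'
    using that
  proof (induction n arbitrary: e' rule: inc_induct)
    case base
    have eq: "e' \<le> e + J - (2*real j - 1)*h" using base.prems j1 by (simp add: algebra_simps of_nat_diff)
    show ?case unfolding gps_Nil B_def set_gr[OF j1, symmetric] using gp_mono[OF C eq] by simp
  next
    case (step n)
    let ?x = "(int n + 1, -1::int, True)" and ?y = "(int n + 1, -1::int, False)"
    have xin: "?x \<in> set (gr j)" "?y \<in> set (gr j)" using step.hyps j1 unfolding set_gr[OF j1] Gset_def by auto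
    have nc1: "\<forall>b\<in>B n. pr L b \<noteq> pr L (g ?x)"
      unfolding B_def
      by (rule nocong[OF g]) (use Adisj xin box step.hyps j1 in \<open>auto simp: Gset_def of_nat_diff\<close>)
    have v1: "fs (B n) (g ?x) = -1" using fs_out[OF nc1] M' step.hyps by simp
    have dn: "g (int n, -1, False) \<in> B n" unfolding B_def Gset_def by force
    have n1: "nsum (fs (B n) \<circ> g) ?x \<ge> -1"
      using fs_pl[OF Bminus[of n], of "g (int n, -1, False)"] dn step.hyps
        fs_ge[of "B n" "g (int n+1,-1,False)"] fs_ge[of "B n" "g (int n+1,-2,False)"]
      by (simp add: nsum_up)
    have c1: "cost J h (fs (B n)) (g ?x) \<le> J - h" using cost_gr_bd[OF g v1 n1] by simp
    have cf1: "cf L (fs (B n)) (g ?x) = fs (insert (g ?x) (B n))" using cf_fs[OF nc1] .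
    let ?B' = "insert (g ?x) (B n)"
    have B'eq: "?B' = A \<union> g ` (insert ?x (Gset n))" unfolding B_def by auto
    have nc2: "\<forall>b\<in>?B'. pr L b \<noteq> pr L (g ?y)"
      unfolding B'eq
      by (rule nocong[OF g]) (use Adisj xin box step.hyps j1 in \<open>auto simp: Gset_def of_nat_diff\<close>)
    have v2: "fs ?B' (g ?y) = -1" using fs_out[OF nc2] M step.hyps by simp
    have B'minus: "\<forall>b\<in>?B'. s b = -1" using Bminus[of n] step.hyps M' by auto
    have lt: "0 \<le> int n + 1 \<and> int n + 1 < int j" using step.hyps by auto
    have P': "s (g (int n+1,0,True)) = 1 \<or> g (int n+1,0,True) \<in> ?B'" using P lt unfolding B_def by blast
    have n2: "nsum (fs ?B' \<circ> g) ?y \<ge> 1"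
      using fs_pl[OF B'minus, of "g ?x"] fs_pl[OF B'minus P']
        fs_ge[of "?B'" "g (int n+2,-1,True)"]
      by (simp add: nsum_down add.commute)
    have c2: "cost J h (fs ?B') (g ?y) \<le> - J - h" using cost_gr_bd[OF g v2 n2] by simp
    have cf2: "cf L (fs ?B') (g ?y) = fs (B (Suc n))"
    proof -
      have "insert (g ?y) ?B' = B (Suc n)" unfolding B_def Gset_Suc by simp
      then show ?thesis using cf_fs[OF nc2] by simp
    qed
    have hh: "0 \<le> real n * h" using hpos by simp
    have e1: "e' + (J - h) \<le> 2 * J" using step.prems E hh by linarith
    have e2: "e' + (J - h) + (- J - h) \<le> 2 * J" using e1 Jh hpos by linarith
    have e3: "e' + (J - h) + (- J - h) \<le> e + J - h - 2*real (Suc n)*h"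
      using step.prems by (simp add: algebra_simps)
    have IH: "gp L J h (e' + (J - h) + (- J - h)) (fs (B (Suc n))) (map g (gps (Suc n) (j - 1)) @ ys)"
      using step.IH[OF e3] .
    show ?case unfolding gps_Cons[OF step.hyps(2)]
      apply (simp del: gp.simps)
      apply (rule gp_step[where c = "J - h"])
      using e1 c1 apply (simp_all del: gp.simps)
      unfolding cf1
      apply (rule gp_step[where c = "- J - h"])
      using e2 c2 apply (simp_all del: gp.simps)
      unfolding cf2 using IH by simp
  qed
  let ?x = "(0::int, -1::int, False)"
  have xin: "?x \<in> set (gr j)" unfolding gr_def by simp
  have nc: "\<forall>b\<in>A. pr L b \<noteq> pr L (g ?x)" using Adisj xin by blast
  have v: "fs A (g ?x) = -1" using fs_out[OF nc] M j1 by simp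
  have P0: "s (g (0,0,True)) = 1 \<or> g (0,0,True) \<in> A" using P j1 by simp
  have n: "nsum (fs A \<circ> g) ?x \<ge> -1"
    using fs_pl[OF Aminus P0] fs_ge[of A "g (0,-1,True)"] fs_ge[of A "g (1,-1,True)"]
    by (simp add: nsum_down)
  have c: "cost J h (fs A) (g ?x) \<le> J - h" using cost_gr_bd[OF g v n] by simp
  have cf: "cf L (fs A) (g ?x) = fs (B 0)" using cf_fs[OF nc] unfolding B_def Gset_0 by simp
  have e1: "e + (J - h) \<le> 2 * J" using E Jh hpos by linarith
  have P: "gp L J h (e + (J - h)) (fs (B 0)) (map g (gps 0 (j-1)) @ ys)"
    using pairs[of 0 "e + (J - h)"] by simp
  show ?thesis
    unfolding gr_def
    apply (simp del: gp.simps)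
    apply (rule gp_step[where c = "J - h"])
    using e1 c apply (simp_all del: gp.simps)
    unfolding cf using P by simp
qed

end



locale tor2 = tor +
  fixes l :: nat
  assumes l1: "l \<ge> 1" and lo: "(2 * real l - 1) * h < J" and hi: "J < (2 * real l + 1) * h"
    and lbox: "2 * int l + 4 \<le> int L"
    and ok: "loc_ok s"
begin

definition good :: bool where "good \<longleftrightarrow> (\<exists>xs. gp L J h 0 s xs)"

definition std :: "(face \<Rightarrow> face) \<Rightarrow> bool" where
  "std g \<longleftrightarrow> s (g (0,0,True)) = 1 \<and> s (g (0,-1,False)) = -1"

definition cs :: "(face \<Rightarrow> face) \<Rightarrow> bool" where
  "cs g \<longleftrightarrow> std g \<and> s (g (-1,0,True)) = -1 \<and> s (g (-1,0,False)) = 1"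

definition crit :: "(face \<Rightarrow> face) \<Rightarrow> bool" where
  "crit g \<longleftrightarrow> (\<forall>k::int. 1 \<le> k \<and> k < int l \<longrightarrow> s (g (k,0,True)) = 1) \<and> s (g (int l,0,True)) = -1"

lemma pmt_s: "pmt s" by (rule pm)

lemma walk_g:
  assumes g: "autom L g" and st: "std g" and str: "\<forall>k::int. 1 \<le> k \<and> k \<le> n \<longrightarrow> s (g (k,0,True)) = 1"
    and k: "0 \<le> k" "k \<le> n"
  shows "s (g (k,0,True)) = 1" "s (g (k,-1,False)) = -1"
proof -
  have "\<forall>k::int. 0 \<le> k \<and> k \<le> n \<longrightarrow> (s \<circ> g) (k,0,True) = 1 \<and> (s \<circ> g) (k,-1,False) = -1"
    by (rule walk[OF pmt_comp[OF pm] loc_ok_autom[OF ok g] L1]) (use st str in \<open>auto simp: std_def\<close>)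
  then show "s (g (k,0,True)) = 1" "s (g (k,-1,False)) = -1" using k by auto
qed

lemma facts_g:
  assumes g: "autom L g" and a: "s (g (k,0,True)) = 1" and b: "s (g (k,-1,False)) = -1"
  shows "s (g (k,-1,True)) = -1" "s (g (k+1,-1,True)) = -1" "s (g (k+1,-1,False)) = -1" "s (g (k+1,-2,False)) = -1"
    "s (g (k,0,False)) = 1" "s (g (k-1,0,False)) = 1"
  using std_facts_at[OF pmt_comp[OF pm] loc_ok_autom[OF ok g] L1, of k] a b by auto

lemma box_l: "int l + 3 \<le> int L" using lbox l1 by linarith

lemma grow_good:
  assumes g: "autom L g" and st: "std g" and str: "\<forall>k::int. 1 \<le> k \<and> k \<le> int l \<longrightarrow> s (g (k,0,True)) = 1"
  shows good
proof -
  have W: "s (g (k,0,True)) = 1" "s (g (k,-1,False)) = -1" if "0 \<le> k" "k \<le> int l" for k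
    using walk_g[OF g st str that] by auto
  have C: "gp L J h (0 + J - (2*real (l+1) - 1)*h) (fs ({} \<union> g ` set (gr (l+1)))) []"
    using hi by (simp add: algebra_simps)
  have "gp L J h 0 (fs {}) (map g (gr (l+1)) @ [])"
  proof (rule GR[OF g _ _ _ _ _ _ _ _ C])
    show "int (l + 1) + 2 \<le> int L" using box_l by simp
    show "\<forall>k::int. 0 \<le> k \<and> k < int (l+1) \<longrightarrow> s (g (k,0,True)) = 1 \<or> g (k,0,True) \<in> {}"
      using W by auto
    show "\<forall>k::int. 0 \<le> k \<and> k < int (l+1) \<longrightarrow> s (g (k,-1,False)) = -1" using W by auto
    show "\<forall>k::int. 1 \<le> k \<and> k < int (l+1) \<longrightarrow> s (g (k,-1,True)) = -1"
      using W facts_g(1)[OF g] by auto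
    show "(0::real) \<le> 2 * h" using hpos by simp
  qed auto
  then show ?thesis unfolding good_def fs_empty by auto
qed

lemma shrink_good:
  assumes g: "autom L g" and c: "cs g" and m: "1 \<le> m" "m + 1 \<le> l"
    and str: "\<forall>k::int. 1 \<le> k \<and> k < int m \<longrightarrow> s (g (k,0,True)) = 1"
    and cor: "s (g (int m,0,True)) = -1"
  shows good
proof -
  have st: "std g" using c unfolding cs_def by simp
  have str': "\<forall>k::int. 1 \<le> k \<and> k \<le> int m - 1 \<longrightarrow> s (g (k,0,True)) = 1" using str by auto
  have W: "s (g (k,0,True)) = 1" "s (g (k,-1,False)) = -1" if "0 \<le> k" "k \<le> int m - 1" for k
    using walk_g[OF g st str' that] by auto
  have hm: "(2*real m + 1)*h \<le> (2*real l - 1)*h" using m hpos by (intro mult_right_mono) auto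
  have C: "gp L J h (0 + (2*real m+1)*h - J) (fs ({} \<union> g ` set (shr m))) []"
    using hm lo by simp
  have "gp L J h 0 (fs {}) (map g (shr m) @ [])"
  proof (rule SR[OF g _ _ _ _ _ _ _ _ _ _ _ C])
    show "int m + 2 \<le> int L" using box_l m by simp
    show "\<forall>k::int. 0 \<le> k \<and> k < int m \<longrightarrow> s (g (k,0,True)) = 1" using W by auto
    show "\<forall>k::int. 0 \<le> k \<and> k < int m \<longrightarrow> s (g (k,0,False)) = 1" using W facts_g(5)[OF g] by auto
    show "s (g (-1,0,False)) = 1" using c unfolding cs_def by simp
    show "\<forall>k::int. 0 \<le> k \<and> k < int m \<longrightarrow> s (g (k,-1,False)) = -1" using W by auto
    show "s (g (-1,0,True)) = -1 \<or> g (-1,0,True) \<in> {}" using c unfolding cs_def by simp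
    show "s (g (int m,0,True)) = -1 \<or> g (int m,0,True) \<in> {}" using cor by simp
    show "(0::real) \<le> 2 * J" using Jpos by simp
    have "(2*real m - 1)*h \<le> (2*real l - 1)*h" using m hpos by (intro mult_right_mono) auto
    then show "1 \<le> m \<longrightarrow> 0 + J + (2*real m - 1)*h \<le> 2*J" using lo by simp
  qed auto
  then show ?thesis unfolding good_def fs_empty by auto
qed

end



context tor2 begin

lemma side_std:
  assumes g: "autom L g" and st: "std g"
  shows "good \<or> (\<exists>m. 1 \<le> m \<and> m \<le> l \<and> (\<forall>k::int. 1 \<le> k \<and> k < int m \<longrightarrow> s (g (k,0,True)) = 1) \<and> s (g (int m,0,True)) = -1)"
proof (cases "\<forall>k::int. 1 \<le> k \<and> k \<le> int l \<longrightarrow> s (g (k,0,True)) = 1")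
  case True then show ?thesis using grow_good[OF g st] by blast
next
  case False
  then obtain k :: int where k: "1 \<le> k" "k \<le> int l" "s (g (k,0,True)) \<noteq> 1" by blast
  define P where "P n \<longleftrightarrow> 1 \<le> n \<and> n \<le> l \<and> s (g (int n,0,True)) \<noteq> 1" for n
  have "P (nat k)" using k unfolding P_def by auto
  then obtain m where m: "P m" "\<forall>n<m. \<not> P n" using exists_least_iff[of P] by blast
  have m1: "1 \<le> m" "m \<le> l" "s (g (int m,0,True)) = -1" using m(1) s_pm[of "g (int m,0,True)"] unfolding P_def by auto
  have "\<forall>k::int. 1 \<le> k \<and> k < int m \<longrightarrow> s (g (k,0,True)) = 1"
  proof (intro allI impI)
    fix k :: int assume kk: "1 \<le> k \<and> k < int m"
    then have "\<not> P (nat k)" using m(2) by auto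
    then show "s (g (k,0,True)) = 1" using kk m1 unfolding P_def by auto
  qed
  then show ?thesis using m1 by blast
qed

lemma corner:
  assumes g: "autom L g" and st: "std g" and m: "1 \<le> m"
    and str: "\<forall>k::int. 1 \<le> k \<and> k < int m \<longrightarrow> s (g (k,0,True)) = 1"
    and cor: "s (g (int m,0,True)) = -1"
  shows "cs (\<lambda>x. g (Tr (int m) 0 (R x)))" "autom L (\<lambda>x. g (Tr (int m) 0 (R x)))"
proof -
  have str': "\<forall>k::int. 1 \<le> k \<and> k \<le> int m - 1 \<longrightarrow> s (g (k,0,True)) = 1" using str by auto
  have W: "s (g (int m - 1,0,True)) = 1" "s (g (int m - 1,-1,False)) = -1"
    using walk_g[OF g st str', of "int m - 1"] m by auto
  have F: "s (g (int m - 1,0,False)) = 1" using facts_g(5)[OF g W] .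
  show "cs (\<lambda>x. g (Tr (int m) 0 (R x)))" unfolding cs_def std_def
    using W F cor by (simp add: algebra_simps)
  have "autom L (g \<circ> (Tr (int m) 0 \<circ> R))" by (intro autom_comp g autom_Tr autom_R L1)
  then show "autom L (\<lambda>x. g (Tr (int m) 0 (R x)))" by (simp add: o_def)
qed

lemma side_cs:
  assumes g: "autom L g" and c: "cs g"
  shows "good \<or> crit g"
proof -
  have st: "std g" using c unfolding cs_def by simp
  from side_std[OF g st] show ?thesis
  proof
    assume "\<exists>m. 1 \<le> m \<and> m \<le> l \<and> (\<forall>k::int. 1 \<le> k \<and> k < int m \<longrightarrow> s (g (k,0,True)) = 1) \<and> s (g (int m,0,True)) = -1"
    then obtain m where m: "1 \<le> m" "m \<le> l" "\<forall>k::int. 1 \<le> k \<and> k < int m \<longrightarrow> s (g (k,0,True)) = 1" "s (g (int m,0,True)) = -1"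
      by blast
    show ?thesis
    proof (cases "m = l")
      case True then show ?thesis using m unfolding crit_def by auto
    next
      case False then show ?thesis using shrink_good[OF g c m(1) _ m(3) m(4)] m(2) by auto
    qed
  qed simp
qed

definition G1 :: "face \<Rightarrow> face" where "G1 x = Tr (int l) 0 (R x)"

lemma crit_next:
  assumes g: "autom L g" and c: "cs g" and cr: "crit g"
  shows "cs (\<lambda>x. g (G1 x))" "autom L (\<lambda>x. g (G1 x))"
proof -
  have st: "std g" using c unfolding cs_def by simp
  have "1 \<le> l" by (rule l1)
  note cc = corner[OF g st this _ ] 
  show "cs (\<lambda>x. g (G1 x))" "autom L (\<lambda>x. g (G1 x))"
    using cc cr unfolding crit_def G1_def by auto
qed

end



lemma shr_bounds: "x \<in> set (shr m) \<Longrightarrow> -1 \<le> fst x \<and> fst x \<le> int m - 1 \<and> fst (snd x) = 0"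
proof (cases "m = 0")
  case True then show "x \<in> set (shr m) \<Longrightarrow> ?thesis" by (simp add: set_shr0)
next
  case False then show "x \<in> set (shr m) \<Longrightarrow> ?thesis" using set_shr[of m] by auto
qed

lemma gr_bounds: "j \<ge> 1 \<Longrightarrow> x \<in> set (gr j) \<Longrightarrow> 0 \<le> fst x \<and> fst x \<le> int j - 1 \<and> fst (snd x) = -1"
  using set_gr[of j] unfolding Gset_def by auto

context tor2 begin

lemma G1_T: "G1 (u,v,True) = (int l - v - 1, u+v, False)" unfolding G1_def by simp
lemma G1_F: "G1 (u,v,False) = (int l - v - 1, u+v+1, True)" unfolding G1_def by simp

lemma far:
  assumes g: "autom L g" and ne: "z \<noteq> z'" and b: "\<bar>fst z - fst z'\<bar> < int L" "\<bar>fst (snd z) - fst (snd z')\<bar> < int L"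
  shows "pr L (g z) \<noteq> pr L (g z')"
proof
  assume p: "pr L (g z) = pr L (g z')"
  obtain u v t where z: "z = (u,v,t)" by (cases z)
  obtain u' v' t' where z': "z' = (u',v',t')" by (cases z')
  show False using pr_g_box[OF g, of u v t u' v' t'] p b ne z z' by auto
qed

lemma side_facts:
  assumes g: "autom L g" and c: "cs g" and cr: "crit g" and k: "0 \<le> k" "k \<le> int l - 1"
  shows "s (g (k,0,True)) = 1" "s (g (k,-1,False)) = -1" "s (g (k,-1,True)) = -1" "s (g (k+1,-1,True)) = -1"
    "s (g (k+1,-1,False)) = -1" "s (g (k,0,False)) = 1"
proof -
  have st: "std g" using c unfolding cs_def by simp
  have str: "\<forall>k::int. 1 \<le> k \<and> k \<le> int l - 1 \<longrightarrow> s (g (k,0,True)) = 1" using cr unfolding crit_def by auto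
  note W = walk_g[OF g st str k]
  show "s (g (k,0,True)) = 1" "s (g (k,-1,False)) = -1" using W by auto
  show "s (g (k,-1,True)) = -1" "s (g (k+1,-1,True)) = -1" "s (g (k+1,-1,False)) = -1" "s (g (k,0,False)) = 1"
    using facts_g[OF g W] by auto
qed

lemma pos_sets:
  assumes g: "autom L g" and c: "cs g" and cr: "crit g" and m: "m \<le> l"
  shows "\<forall>x\<in>set (shr m). s (g x) = 1"
proof
  fix x assume x: "x \<in> set (shr m)"
  show "s (g x) = 1"
  proof (cases "m = 0")
    case True then show ?thesis using x c unfolding cs_def by (simp add: set_shr0)
  next
    case False
    then have "(\<exists>i. x = (i,0,True) \<and> 0 \<le> i \<and> i \<le> int m - 1) \<or> (\<exists>i. x = (i,0,False) \<and> -1 \<le> i \<and> i \<le> int m - 1)"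
      using x set_shr[of m] by auto
    then show ?thesis
    proof
      assume "\<exists>i. x = (i,0,True) \<and> 0 \<le> i \<and> i \<le> int m - 1"
      then show ?thesis using side_facts(1)[OF g c cr] m by auto
    next
      assume "\<exists>i. x = (i,0,False) \<and> -1 \<le> i \<and> i \<le> int m - 1"
      then obtain i where i: "x = (i,0,False)" "-1 \<le> i" "i \<le> int m - 1" by blast
      show ?thesis
      proof (cases "i = -1")
        case True then show ?thesis using i c unfolding cs_def by simp
      next
        case False then show ?thesis using i side_facts(6)[OF g c cr, of i] m by auto
      qed
    qed
  qed
qed

lemma neg_sets:
  assumes g: "autom L g" and c: "cs g" and cr: "crit g"
  shows "\<forall>x\<in>set (gr l). s (g x) = -1"
proof
  fix x assume x: "x \<in> set (gr l)"
  then have "(\<exists>i. x = (i,-1,False) \<and> 0 \<le> i \<and> i \<le> int l - 1) \<or> (\<exists>i. x = (i,-1,True) \<and> 1 \<le> i \<and> i \<le> int l - 1)"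
    using set_gr[OF l1] unfolding Gset_def using l1 by auto
  then show "s (g x) = -1"
  proof
    assume "\<exists>i. x = (i,-1,False) \<and> 0 \<le> i \<and> i \<le> int l - 1"
    then show ?thesis using side_facts(2)[OF g c cr] by auto
  next
    assume "\<exists>i. x = (i,-1,True) \<and> 1 \<le> i \<and> i \<le> int l - 1"
    then show ?thesis using side_facts(3)[OF g c cr] by auto
  qed
qed

end



context tor2 begin

lemma compound_grow:
  assumes g: "autom L g" and c: "cs g" and crB: "crit g"
    and crC: "crit (\<lambda>x. g (G1 x))" and crD: "crit (\<lambda>x. g (G1 (G1 x)))"
    and case_: "J < 2 * real l * h"
  shows good
proof -
  define gC where "gC = (\<lambda>x. g (G1 x))"
  have gC: "autom L gC" "cs gC" using crit_next[OF g c crB] unfolding gC_def by auto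
  have crC': "crit gC" using crC unfolding gC_def .
  define gD where "gD = (\<lambda>x. gC (G1 x))"
  have gD: "autom L gD" "cs gD" using crit_next[OF gC crC'] unfolding gD_def by auto
  have crD': "crit gD" using crD unfolding gD_def gC_def .
  define gD' where "gD' = (\<lambda>x. gD (Tr (-1) 0 x))"
  have gD': "autom L gD'"
  proof -
    have "autom L (gD \<circ> Tr (-1) 0)" by (intro autom_comp gD(1) autom_Tr L1)
    then show ?thesis unfolding gD'_def by (simp add: o_def)
  qed
  note CF = side_facts[OF gC(1) gC(2) crC']
  note DF = side_facts[OF gD(1) gD(2) crD']
  define A1 where "A1 = gC ` set (gr l)"
  have e1: "J - (2 * real l - 1) * h \<le> 2 * h" using hi by (simp add: algebra_simps)
  have fin: "J - (2 * real l - 1) * h + J - (2 * real (l + 1) - 1) * h < 0"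
    using case_ by (simp add: algebra_simps)
  have run2: "gp L J h (J - (2 * real l - 1) * h) (fs A1) (map gD' (gr (l+1)) @ [])"
  proof (rule GR[OF gD'])
    show "int (l + 1) + 2 \<le> int L" using box_l by simp
    show "l + 1 \<ge> 1" by simp
    show "\<forall>a\<in>A1. s a = -1" unfolding A1_def using neg_sets[OF gC(1) gC(2) crC'] by blast
    show "\<forall>a\<in>A1. \<forall>x\<in>set (gr (l+1)). pr L a \<noteq> pr L (gD' x)"
    proof (intro ballI)
      fix a x assume a: "a \<in> A1" and x: "x \<in> set (gr (l+1))"
      obtain z where z: "z \<in> set (gr l)" "a = gC z" using a unfolding A1_def by blast
      obtain u v t where xx: "x = (u,v,t)" by (cases x)
      have zb: "0 \<le> fst z \<and> fst z \<le> int l - 1 \<and> fst (snd z) = -1" using gr_bounds[OF l1 z(1)] .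
      have xb: "0 \<le> u \<and> u \<le> int l \<and> v = -1" using gr_bounds[of "l+1" x] x xx by simp
      have gx: "gD' x = gC (G1 (u - 1, v, t))" unfolding gD'_def gD_def xx by simp
      have G: "fst (G1 (u - 1, v, t)) = int l" "fst (snd (G1 (u - 1, v, t))) \<ge> -2"
        "fst (snd (G1 (u - 1, v, t))) \<le> int l - 1"
        using xb by (cases t; simp add: G1_T G1_F)+
      have "pr L (gC z) \<noteq> pr L (gC (G1 (u - 1, v, t)))"
        by (rule far[OF gC(1)]) (use zb G box_l in auto)
      then show "pr L a \<noteq> pr L (gD' x)" using z gx by simp
    qed
    show "\<forall>k::int. 0 \<le> k \<and> k < int (l+1) \<longrightarrow> s (gD' (k,0,True)) = 1 \<or> gD' (k,0,True) \<in> A1"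
    proof (intro allI impI)
      fix k :: int assume k: "0 \<le> k \<and> k < int (l+1)"
      show "s (gD' (k,0,True)) = 1 \<or> gD' (k,0,True) \<in> A1"
      proof (cases "k = 0")
        case True
        have "gD' (k,0,True) = gC (int l - 1, -1, False)" unfolding gD'_def gD_def True by (simp add: G1_T)
        moreover have "(int l - 1, -1, False) \<in> set (gr l)" using set_gr[OF l1] l1 unfolding Gset_def by auto
        ultimately show ?thesis unfolding A1_def by auto
      next
        case False then show ?thesis using DF(1)[of "k-1"] k unfolding gD'_def by simp
      qed
    qed
    show "\<forall>k::int. 0 \<le> k \<and> k < int (l+1) \<longrightarrow> s (gD' (k,-1,False)) = -1"
    proof (intro allI impI)
      fix k :: int assume k: "0 \<le> k \<and> k < int (l+1)"
      show "s (gD' (k,-1,False)) = -1"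
      proof (cases "k = 0")
        case True
        have "gD' (k,-1,False) = gC (int l - 1 + 1, -1, True)" unfolding gD'_def gD_def True by (simp add: G1_F)
        then show ?thesis using CF(4)[of "int l - 1"] l1 by simp
      next
        case False then show ?thesis using DF(2)[of "k-1"] k unfolding gD'_def by simp
      qed
    qed
    show "\<forall>k::int. 1 \<le> k \<and> k < int (l+1) \<longrightarrow> s (gD' (k,-1,True)) = -1"
      using DF(3) unfolding gD'_def by simp
    show "J - (2 * real l - 1) * h \<le> 2 * h" by (rule e1)
    show "gp L J h (J - (2 * real l - 1) * h + J - (2 * real (l + 1) - 1) * h) (fs (A1 \<union> gD' ` set (gr (l + 1)))) []"
      using fin by simp
  qed
  have run1: "gp L J h 0 (fs {}) (map gC (gr l) @ (map gD' (gr (l+1)) @ []))"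
  proof (rule GR[OF gC(1)])
    show "int l + 2 \<le> int L" using box_l by simp
    show "l \<ge> 1" by (rule l1)
    show "\<forall>k::int. 0 \<le> k \<and> k < int l \<longrightarrow> s (gC (k,0,True)) = 1 \<or> gC (k,0,True) \<in> {}" using CF(1) by auto
    show "\<forall>k::int. 0 \<le> k \<and> k < int l \<longrightarrow> s (gC (k,-1,False)) = -1" using CF(2) by auto
    show "\<forall>k::int. 1 \<le> k \<and> k < int l \<longrightarrow> s (gC (k,-1,True)) = -1" using CF(3) by auto
    show "(0::real) \<le> 2 * h" using hpos by simp
    show "gp L J h (0 + J - (2 * real l - 1) * h) (fs ({} \<union> gC ` set (gr l))) (map gD' (gr (l + 1)) @ [])"
      using run2 unfolding A1_def by simp
  qed auto
  then show ?thesis unfolding good_def fs_empty by auto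
qed

end



context tor2 begin

lemma compound_shrink:
  assumes g: "autom L g" and c: "cs g" and crB: "crit g"
    and crC: "crit (\<lambda>x. g (G1 x))" and crD: "crit (\<lambda>x. g (G1 (G1 x)))"
    and case_: "2 * real l * h \<le> J"
  shows good
proof -
  define gC where "gC = (\<lambda>x. g (G1 x))"
  have gC: "autom L gC" "cs gC" using crit_next[OF g c crB] unfolding gC_def by auto
  have crC': "crit gC" using crC unfolding gC_def .
  define gD where "gD = (\<lambda>x. gC (G1 x))"
  have gD: "autom L gD" "cs gD" using crit_next[OF gC crC'] unfolding gD_def by auto
  have crD': "crit gD" using crD unfolding gD_def gC_def .
  define gD1 where "gD1 = (\<lambda>x. gD (Tr 1 0 x))"
  have gD1: "autom L gD1"
  proof -
    have "autom L (gD \<circ> Tr 1 0)" by (intro autom_comp gD(1) autom_Tr L1)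
    then show ?thesis unfolding gD1_def by (simp add: o_def)
  qed
  note BF = side_facts[OF g c crB]
  note CF = side_facts[OF gC(1) gC(2) crC']
  note DF = side_facts[OF gD(1) gD(2) crD']
  define m where "m = l - 1"
  have rm: "real m = real l - 1" "int m = int l - 1" using l1 unfolding m_def by auto
  have ml: "m \<le> l" "m + 1 = l" using l1 unfolding m_def by auto
  define A1 where "A1 = gC ` set (shr l)"
  define A2 where "A2 = A1 \<union> g ` set (shr m)"
  define e1 where "e1 = (2 * real l + 1) * h - J"
  define e2 where "e2 = e1 + (2 * real m + 1) * h - J"
  have A1p: "\<forall>a\<in>A1. s a = 1" unfolding A1_def using pos_sets[OF gC(1) gC(2) crC'] by blast
  have A2p: "\<forall>a\<in>A2. s a = 1" unfolding A2_def using A1p pos_sets[OF g c crB ml(1)] by blast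
  have G1set: "fst (G1 z) = int l - 1 \<and> 0 \<le> fst (snd (G1 z)) \<and> fst (snd (G1 z)) \<le> int l" if "z \<in> set (shr l)" for z
  proof -
    obtain u v t where zz: "z = (u,v,t)" by (cases z)
    have "-1 \<le> u \<and> u \<le> int l - 1 \<and> v = 0" using shr_bounds[OF that] zz by simp
    moreover have "t \<Longrightarrow> 0 \<le> u" using that zz l1 set_shr[of l] by auto
    ultimately show ?thesis using zz by (cases t) (auto simp: G1_T G1_F)
  qed
  have G1G1: "gD1 (u,v,t) = g (G1 (G1 (u+1,v,t)))" for u v t unfolding gD1_def gD_def gC_def by simp
  have G1G1set: "0 \<le> fst (snd (G1 (G1 (u+1,0,t)))) - int l \<and> fst (snd (G1 (G1 (u+1,0,t)))) \<le> 2 * int l - 1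
     \<and> -1 \<le> fst (G1 (G1 (u+1,0,t))) \<and> fst (G1 (G1 (u+1,0,t))) \<le> int l - 2
     \<and> (t \<longrightarrow> fst (snd (G1 (G1 (u+1,0,t)))) \<ge> int l + 1)"
    if "(u,0,t) \<in> set (shr m)" for u t
  proof -
    have "-1 \<le> u \<and> u \<le> int m - 1" using shr_bounds[OF that] by simp
    moreover have "t \<Longrightarrow> 0 \<le> u" using that set_shr[of m] set_shr0 by (cases "m = 0") auto
    ultimately show ?thesis using rm by (cases t) (auto simp: G1_T G1_F)
  qed
  have run3: "gp L J h e2 (fs A2) (map gD1 (shr m) @ [])"
  proof (rule SR[OF gD1])
    show "int m + 2 \<le> int L" using box_l rm by simp
    show "\<forall>a\<in>A2. s a = 1" by (rule A2p)
    show "\<forall>a\<in>A2. \<forall>x\<in>set (shr m). pr L a \<noteq> pr L (gD1 x)"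
    proof (intro ballI)
      fix a x assume a: "a \<in> A2" and x: "x \<in> set (shr m)"
      obtain u v t where xx: "x = (u,v,t)" by (cases x)
      have v0: "v = 0" using shr_bounds[OF x] xx by simp
      have xb: "(u,0,t) \<in> set (shr m)" using x xx v0 by simp
      note XB = G1G1set[OF xb]
      have gx: "gD1 x = g (G1 (G1 (u+1,0,t)))" using G1G1 xx v0 by simp
      show "pr L a \<noteq> pr L (gD1 x)"
      proof (cases "a \<in> A1")
        case True
        then obtain z where z: "z \<in> set (shr l)" "a = g (G1 z)" unfolding A1_def gC_def by blast
        note ZB = G1set[OF z(1)]
        have ne: "G1 z \<noteq> G1 (G1 (u+1,0,t))"
        proof
          assume eq: "G1 z = G1 (G1 (u+1,0,t))"
          then show False using ZB XB by (cases t) auto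
        qed
        have "pr L (g (G1 z)) \<noteq> pr L (g (G1 (G1 (u+1,0,t))))"
          by (rule far[OF g ne]) (use ZB XB lbox l1 in auto)
        then show ?thesis using z gx by simp
      next
        case False
        then obtain z where z: "z \<in> set (shr m)" "a = g z" using a unfolding A2_def by blast
        have ZB: "-1 \<le> fst z \<and> fst z \<le> int m - 1 \<and> fst (snd z) = 0" using shr_bounds[OF z(1)] .
        have ne: "z \<noteq> G1 (G1 (u+1,0,t))" using ZB XB l1 by auto
        have "pr L (g z) \<noteq> pr L (g (G1 (G1 (u+1,0,t))))"
          by (rule far[OF g ne]) (use ZB XB lbox l1 rm in auto)
        then show ?thesis using z gx by simp
      qed
    qed
    show "\<forall>k::int. 0 \<le> k \<and> k < int m \<longrightarrow> s (gD1 (k,0,True)) = 1"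
      using DF(1) rm unfolding gD1_def by simp
    show "\<forall>k::int. 0 \<le> k \<and> k < int m \<longrightarrow> s (gD1 (k,0,False)) = 1"
      using DF(6) rm unfolding gD1_def by simp
    show "s (gD1 (-1,0,False)) = 1" using DF(6)[of 0] l1 unfolding gD1_def by simp
    show "\<forall>k::int. 0 \<le> k \<and> k < int m \<longrightarrow> s (gD1 (k,-1,False)) = -1"
      using DF(2) rm unfolding gD1_def by simp
    have "gD1 (-1,0,True) = gC (int l - 1, 0, False)" unfolding gD1_def gD_def by (simp add: G1_T)
    moreover have "(int l - 1, 0, False) \<in> set (shr l)" using set_shr[of l] l1 by auto
    ultimately show "s (gD1 (-1,0,True)) = -1 \<or> gD1 (-1,0,True) \<in> A2" unfolding A2_def A1_def by auto
    show "s (gD1 (int m,0,True)) = -1 \<or> gD1 (int m,0,True) \<in> A2"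
      using crD' rm unfolding crit_def gD1_def by simp
    have "e2 = 4 * (real l * h) - 2 * J" unfolding e2_def e1_def rm by (simp add: algebra_simps)
    then show "e2 \<le> 2 * J" using case_ Jpos by simp
    show "1 \<le> m \<longrightarrow> e2 + J + (2 * real m - 1) * h \<le> 2 * J"
      unfolding e2_def e1_def rm using case_ lo hpos by (simp add: algebra_simps)
    show "gp L J h (e2 + (2 * real m + 1) * h - J) (fs (A2 \<union> gD1 ` set (shr m))) []"
      unfolding e2_def e1_def rm using case_ hpos by (simp add: algebra_simps)
  qed
  have run2: "gp L J h e1 (fs A1) (map g (shr m) @ (map gD1 (shr m) @ []))"
  proof (rule SR[OF g])
    show "int m + 2 \<le> int L" using box_l rm by simp
    show "\<forall>a\<in>A1. s a = 1" by (rule A1p)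
    show "\<forall>a\<in>A1. \<forall>x\<in>set (shr m). pr L a \<noteq> pr L (g x)"
    proof (intro ballI)
      fix a x assume a: "a \<in> A1" and x: "x \<in> set (shr m)"
      obtain z where z: "z \<in> set (shr l)" "a = g (G1 z)" using a unfolding A1_def gC_def by blast
      note ZB = G1set[OF z(1)]
      have XB: "-1 \<le> fst x \<and> fst x \<le> int m - 1 \<and> fst (snd x) = 0" using shr_bounds[OF x] .
      have ne: "G1 z \<noteq> x" using ZB XB rm by auto
      have "pr L (g (G1 z)) \<noteq> pr L (g x)"
        by (rule far[OF g ne]) (use ZB XB lbox l1 rm in auto)
      then show "pr L a \<noteq> pr L (g x)" using z by simp
    qed
    show "\<forall>k::int. 0 \<le> k \<and> k < int m \<longrightarrow> s (g (k,0,True)) = 1" using BF(1) rm by simp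
    show "\<forall>k::int. 0 \<le> k \<and> k < int m \<longrightarrow> s (g (k,0,False)) = 1" using BF(6) rm by simp
    show "s (g (-1,0,False)) = 1" using c unfolding cs_def by simp
    show "\<forall>k::int. 0 \<le> k \<and> k < int m \<longrightarrow> s (g (k,-1,False)) = -1" using BF(2) rm by simp
    show "s (g (-1,0,True)) = -1 \<or> g (-1,0,True) \<in> A1" using c unfolding cs_def by simp
    have "g (int m,0,True) = gC (-1, 0, False)" unfolding gC_def rm by (simp add: G1_F)
    moreover have "(-1, 0, False) \<in> set (shr l)" using set_shr[of l] l1 by auto
    ultimately show "s (g (int m,0,True)) = -1 \<or> g (int m,0,True) \<in> A1" unfolding A1_def by auto
    show "e1 \<le> 2 * J" unfolding e1_def using lo Jh hpos by (simp add: algebra_simps)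
    show "1 \<le> m \<longrightarrow> e1 + J + (2 * real m - 1) * h \<le> 2 * J"
      unfolding e1_def rm using lo by (simp add: algebra_simps)
    show "gp L J h (e1 + (2 * real m + 1) * h - J) (fs (A1 \<union> g ` set (shr m))) (map gD1 (shr m) @ [])"
      using run3 unfolding e2_def A2_def by simp
  qed
  have run1: "gp L J h 0 (fs {}) (map gC (shr l) @ (map g (shr m) @ (map gD1 (shr m) @ [])))"
  proof (rule SR[OF gC(1)])
    show "int l + 2 \<le> int L" using box_l by simp
    show "\<forall>k::int. 0 \<le> k \<and> k < int l \<longrightarrow> s (gC (k,0,True)) = 1" using CF(1) by simp
    show "\<forall>k::int. 0 \<le> k \<and> k < int l \<longrightarrow> s (gC (k,0,False)) = 1" using CF(6) by simp
    show "s (gC (-1,0,False)) = 1" using gC(2) unfolding cs_def by simp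
    show "\<forall>k::int. 0 \<le> k \<and> k < int l \<longrightarrow> s (gC (k,-1,False)) = -1" using CF(2) by simp
    show "s (gC (-1,0,True)) = -1 \<or> gC (-1,0,True) \<in> {}" using gC(2) unfolding cs_def by simp
    show "s (gC (int l,0,True)) = -1 \<or> gC (int l,0,True) \<in> {}" using crC' unfolding crit_def by simp
    show "(0::real) \<le> 2 * J" using Jpos by simp
    show "1 \<le> l \<longrightarrow> 0 + J + (2 * real l - 1) * h \<le> 2 * J" using lo by simp
    show "gp L J h (0 + (2 * real l + 1) * h - J) (fs ({} \<union> gC ` set (shr l))) (map g (shr m) @ map gD1 (shr m) @ [])"
      using run2 unfolding e1_def A1_def by simp
  qed auto
  then show ?thesis unfolding good_def fs_empty by auto
qed

end



context tor2 begin

lemma from_std: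
  assumes g: "autom L g" and st: "std g"
  shows good
proof -
  from side_std[OF g st] show ?thesis
  proof
    assume "\<exists>m. 1 \<le> m \<and> m \<le> l \<and> (\<forall>k::int. 1 \<le> k \<and> k < int m \<longrightarrow> s (g (k,0,True)) = 1) \<and> s (g (int m,0,True)) = -1"
    then obtain m where m: "1 \<le> m" "\<forall>k::int. 1 \<le> k \<and> k < int m \<longrightarrow> s (g (k,0,True)) = 1" "s (g (int m,0,True)) = -1"
      by blast
    define g1 where "g1 = (\<lambda>x. g (Tr (int m) 0 (R x)))"
    have g1: "cs g1" "autom L g1" using corner[OF g st m] unfolding g1_def by auto
    show good
    proof (cases "crit g1")
      case False then show ?thesis using side_cs[OF g1(2) g1(1)] by auto
    next
      case cr1: True
      define g2 where "g2 = (\<lambda>x. g1 (G1 x))"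
      have g2: "cs g2" "autom L g2" using crit_next[OF g1(2) g1(1) cr1] unfolding g2_def by auto
      show good
      proof (cases "crit g2")
        case False then show ?thesis using side_cs[OF g2(2) g2(1)] by auto
      next
        case cr2: True
        define g3 where "g3 = (\<lambda>x. g2 (G1 x))"
        have g3: "cs g3" "autom L g3" using crit_next[OF g2(2) g2(1) cr2] unfolding g3_def by auto
        show good
        proof (cases "crit g3")
          case False then show ?thesis using side_cs[OF g3(2) g3(1)] by auto
        next
          case cr3: True
          have c2: "crit (\<lambda>x. g1 (G1 x))" using cr2 unfolding g2_def .
          have c3: "crit (\<lambda>x. g1 (G1 (G1 x)))" using cr3 unfolding g3_def g2_def .
          show good
          proof (cases "J < 2 * real l * h")
            case True then show ?thesis using compound_grow[OF g1(2) g1(1) cr1 c2 c3] by blast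
          next
            case False then show ?thesis using compound_shrink[OF g1(2) g1(1) cr1 c2 c3] by simp
          qed
        qed
      qed
    qed
  qed
qed

end

context tor begin

lemma nsum_odd: "nsum s x = -3 \<or> nsum s x = -1 \<or> nsum s x = 1 \<or> nsum s x = 3"
proof -
  obtain u v t where x: "x = (u,v,t)" by (cases x)
  show ?thesis
  proof (cases t)
    case True
    have e: "nsum s x = s (u,v,False) + s (u,v-1,False) + s (u-1,v,False)" using x True by (simp add: nsum_up)
    show ?thesis using s_pm[of "(u,v,False)"] s_pm[of "(u,v-1,False)"] s_pm[of "(u-1,v,False)"]
      unfolding e by auto
  next
    case False
    have e: "nsum s x = s (u,v,True) + s (u,v+1,True) + s (u+1,v,True)" using x False by (simp add: nsum_down)
    show ?thesis using s_pm[of "(u,v,True)"] s_pm[of "(u,v+1,True)"] s_pm[of "(u+1,v,True)"]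
      unfolding e by auto
  qed
qed

lemma cost_s: "cost J h u x = real_of_int (u x) * (J * real_of_int (nsum u x) + h)"
  unfolding cost_def nsum_def by simp

lemma sum_cf:
  assumes "distinct (map (pr L) ys)" "x \<in> set ys"
  shows "sum_list (map (cf L s x) ys) = sum_list (map s ys) - 2 * s x"
  using assms
proof (induction ys)
  case Nil then show ?case by simp
next
  case (Cons y ys)
  show ?case
  proof (cases "y = x")
    case True
    have nin: "pr L x \<notin> pr L ` set ys" using Cons.prems(1) True by simp
    have "\<forall>z\<in>set ys. pr L z \<noteq> pr L x"
    proof
      fix z assume "z \<in> set ys"
      then have "pr L z \<in> pr L ` set ys" by simp
      then show "pr L z \<noteq> pr L x" using nin by metis
    qed
    then have "sum_list (map (cf L s x) ys) = sum_list (map s ys)"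
      unfolding cf_def by (intro arg_cong[where f = sum_list] map_cong) auto
    then show ?thesis using True unfolding cf_def by simp
  next
    case False
    then have xs: "x \<in> set ys" using Cons.prems(2) by simp
    have "pr L y \<noteq> pr L x" using Cons.prems xs by auto
    then show ?thesis using Cons.IH[OF _ xs] Cons.prems(1) unfolding cf_def by simp
  qed
qed

lemma nbs_sym: "y \<in> set (nbs x) \<Longrightarrow> x \<in> set (nbs y)"
proof -
  obtain u v t where x: "x = (u,v,t)" by (cases x)
  assume "y \<in> set (nbs x)"
  then show ?thesis unfolding x by (cases t) auto
qed

lemma nbs_type: "y \<in> set (nbs x) \<Longrightarrow> snd (snd y) \<noteq> snd (snd x)"
proof -
  obtain u v t where x: "x = (u,v,t)" by (cases x)
  assume "y \<in> set (nbs x)"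
  then show ?thesis unfolding x by (cases t) auto
qed

lemma cost_le_p: "u x = 1 \<Longrightarrow> nsum u x \<le> k \<Longrightarrow> cost J h u x \<le> J * k + h"
proof -
  assume a: "u x = 1" "nsum u x \<le> k"
  have "J * real_of_int (nsum u x) \<le> J * real_of_int k" using a(2) Jpos by (intro mult_left_mono) auto
  then show ?thesis unfolding cost_s a(1) by simp
qed

lemma cost_le_m: "u x = -1 \<Longrightarrow> nsum u x \<ge> k \<Longrightarrow> cost J h u x \<le> - J * k - h"
proof -
  assume a: "u x = -1" "nsum u x \<ge> k"
  have "J * real_of_int (nsum u x) \<ge> J * real_of_int k" using a(2) Jpos by (intro mult_left_mono) auto
  then show ?thesis unfolding cost_s a(1) by simp
qed

lemma red_a: "s x = 1 \<Longrightarrow> nsum s x < 1 \<Longrightarrow> \<exists>xs. gp L J h 0 s xs"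
proof -
  assume a: "s x = 1" "nsum s x < 1"
  then have "nsum s x \<le> -1" using nsum_odd[of x] by auto
  then have c: "cost J h s x \<le> - J + h" using cost_le_p[of s x "-1"] a \<open>nsum s x \<le> -1\<close> by simp
  then have "gp L J h 0 s [x]" using hpos Jh by simp
  then show ?thesis by blast
qed

lemma red_b: "s x = -1 \<Longrightarrow> nsum s x > -1 \<Longrightarrow> \<exists>xs. gp L J h 0 s xs"
proof -
  assume b: "s x = -1" "nsum s x > -1"
  then have "nsum s x \<ge> 1" using nsum_odd[of x] by auto
  then have c: "cost J h s x \<le> - J - h" using cost_le_m[of s x 1] b \<open>nsum s x \<ge> 1\<close> by simp
  then have "gp L J h 0 s [x]" using hpos Jh by simp
  then show ?thesis by blast
qed

lemma red_c:
  assumes c: "y \<in> set (nbs x)" "s x = -1" "s y = -1" "nsum s x \<ge> -1" "nsum s y \<ge> -1" "nsum s x \<le> -1"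
  shows "\<exists>xs. gp L J h 0 s xs"
proof -
  have nx: "nsum s x = -1" using c by simp
  have c1: "cost J h s x = J - h" using nx c(2) by (simp add: cost_s)
  have xy: "x \<in> set (nbs y)" using nbs_sym[OF c(1)] .
  have pxy: "pr L y \<noteq> pr L x" using nbs_type[OF c(1)] unfolding pr_def by auto
  have uy: "cf L s x y = -1" unfolding cf_def using pxy c by simp
  have ny: "nsum (cf L s x) y = nsum s y + 2"
    unfolding nsum_def sum_cf[OF distinct_nbs[OF L2] xy] using c by simp
  have "nsum (cf L s x) y \<ge> 1" using ny c by simp
  then have c2: "cost J h (cf L s x) y \<le> - J - h" using cost_le_m[of "cf L s x" y 1] uy \<open>nsum (cf L s x) y \<ge> 1\<close> by simp
  have "gp L J h 0 s [x, y]" using c1 c2 hpos Jh by simp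
  then show ?thesis by blast
qed

lemma reduction:
  assumes nok: "\<not> loc_ok s"
  shows "\<exists>xs. gp L J h 0 s xs"
proof (cases "\<forall>x. s x = 1 \<longrightarrow> nsum s x \<ge> 1")
  case False then show ?thesis using red_a by force
next
  case P1: True
  show ?thesis
  proof (cases "\<forall>x. s x = -1 \<longrightarrow> nsum s x \<le> -1")
    case False then show ?thesis using red_b by force
  next
    case P2: True
    have "\<not> (\<forall>x y. y \<in> set (nbs x) \<longrightarrow> s x = -1 \<longrightarrow> s y = -1 \<longrightarrow> nsum s x \<ge> -1 \<longrightarrow> nsum s y \<ge> -1 \<longrightarrow> False)"
      using nok P1 P2 unfolding loc_ok_def by blast
    then obtain x y where xy: "y \<in> set (nbs x)" "s x = -1" "s y = -1" "nsum s x \<ge> -1" "nsum s y \<ge> -1" by blast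
    then show ?thesis using red_c P2 by blast
  qed
qed

lemma const_s:
  assumes H: "\<And>x y. y \<in> set (nbs x) \<Longrightarrow> s x = s y"
  shows "s x = s (0,0,True)"
proof -
  have h1: "s (u,v,True) = s (u+1,v,True)" for u v
    using H[of "(u,v,False)" "(u+1,v,True)"] H[of "(u,v,True)" "(u,v,False)"] by simp
  have h2: "s (u,v,True) = s (u,v+1,True)" for u v
    using H[of "(u,v,False)" "(u,v+1,True)"] H[of "(u,v,True)" "(u,v,False)"] by simp
  have a: "s (u,v,True) = s (0,v,True)" for u v
  proof (induction u rule: int_induct[where k = 0])
    case base then show ?case by simp
  next
    case (step1 i) then show ?case using h1[of i v] by simp
  next
    case (step2 i) then show ?case using h1[of "i-1" v] by simp
  qed
  have b: "s (0,v,True) = s (0,0,True)" for v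
  proof (induction v rule: int_induct[where k = 0])
    case base then show ?case by simp
  next
    case (step1 i) then show ?case using h2[of 0 i] by simp
  next
    case (step2 i) then show ?case using h2[of 0 "i-1"] by simp
  qed
  obtain u v t where x: "x = (u,v,t)" by (cases x)
  show ?thesis
  proof (cases t)
    case True then show ?thesis using a[of u v] b[of v] x by simp
  next
    case False then show ?thesis using a[of u v] b[of v] x H[of "(u,v,True)" "(u,v,False)"] by simp
  qed
qed

lemma boundary:
  assumes p: "s zp = 1" and m: "s zm = -1"
  shows "\<exists>x y. y \<in> set (nbs x) \<and> s x = 1 \<and> s y = -1"
proof (rule ccontr)
  assume "\<not> ?thesis"
  then have H0: "y \<in> set (nbs x) \<Longrightarrow> s x = 1 \<Longrightarrow> s y = 1" for x y using s_pm[of y] by blast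
  have H: "s x = s y" if "y \<in> set (nbs x)" for x y
    using H0[OF that] H0[OF nbs_sym[OF that]] s_pm[of x] s_pm[of y] by auto
  have "s zp = s zm" using const_s[OF H, of zp] const_s[OF H, of zm] by simp
  then show False using p m by simp
qed

definition std0 :: "(face \<Rightarrow> face) \<Rightarrow> bool" where
  "std0 g \<longleftrightarrow> s (g (0,0,True)) = 1 \<and> s (g (0,-1,False)) = -1"

lemma frame_exists:
  assumes p: "s zp = 1" and m: "s zm = -1"
  shows "\<exists>g. autom L g \<and> std0 g"
proof -
  obtain x y where xy: "y \<in> set (nbs x)" "s x = 1" "s y = -1" using boundary[OF p m] by blast
  obtain u v t where x: "x = (u,v,t)" by (cases x)
  have aR: "autom L R" using autom_R[OF L1] .
  have aT: "autom L (Tr a b)" for a b using autom_Tr[OF L1] .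
  have ac: "autom L (\<lambda>z. f (k z))" if "autom L f" "autom L k" for f k
    using autom_comp[OF that] by (simp add: o_def)
  show ?thesis
  proof (cases t)
    case True
    then consider "y = (u,v,False)" | "y = (u,v-1,False)" | "y = (u-1,v,False)" using xy(1) x by auto
    then show ?thesis
    proof cases
      case 1
      let ?g = "Tr (u+1) v \<circ> R \<circ> R"
      have "autom L ?g" by (intro autom_comp aT aR)
      moreover have "std0 ?g" unfolding std0_def using xy x True 1 by simp
      ultimately show ?thesis by blast
    next
      case 2
      let ?g = "Tr u v"
      have "autom L ?g" using aT .
      moreover have "std0 ?g" unfolding std0_def using xy x True 2 by simp
      ultimately show ?thesis by blast
    next
      case 3
      let ?g = "Tr u (v+1) \<circ> R \<circ> R \<circ> R \<circ> R"
      have "autom L ?g" by (intro autom_comp aT aR)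
      moreover have "std0 ?g" unfolding std0_def using xy x True 3 by simp
      ultimately show ?thesis by blast
    qed
  next
    case False
    then consider "y = (u,v,True)" | "y = (u,v+1,True)" | "y = (u+1,v,True)" using xy(1) x by auto
    then show ?thesis
    proof cases
      case 1
      let ?g = "Tr u (v+1) \<circ> R \<circ> R \<circ> R \<circ> R \<circ> R"
      have "autom L ?g" by (intro autom_comp aT aR)
      moreover have "std0 ?g" unfolding std0_def using xy x False 1 by simp
      ultimately show ?thesis by blast
    next
      case 2
      let ?g = "Tr (u+1) (v+1) \<circ> R \<circ> R \<circ> R"
      have "autom L ?g" by (intro autom_comp aT aR)
      moreover have "std0 ?g" unfolding std0_def using xy x False 2 by simp
      ultimately show ?thesis by blast
    next
      case 3
      let ?g = "Tr (u+1) v \<circ> R"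
      have "autom L ?g" by (intro autom_comp aT aR)
      moreover have "std0 ?g" unfolding std0_def using xy x False 3 by simp
      ultimately show ?thesis by blast
    qed
  qed
qed

end



lemma card_Lam: "card (Lam L) = 2 * L * L"
proof -
  have "card (Lam L) = card ({0..<L} \<times> {0..<L} \<times> (UNIV :: bool set))" unfolding Lam_def ..
  also have "\<dots> = L * (L * 2)" by (simp add: card_cartesian_product)
  finally show ?thesis by simp
qed

lemma ell_exists:
  fixes J h :: real
  assumes h: "0 < h" and Jh: "2 * h \<le> J" and ni: "J / (2 * h) - 1 / 2 \<notin> \<int>"
  shows "\<exists>l::nat. l \<ge> 1 \<and> (2 * real l - 1) * h < J \<and> J < (2 * real l + 1) * h"
proof -
  define a where "a = J / (2 * h)"
  have a1: "a \<ge> 1" unfolding a_def using h Jh by (simp add: field_simps)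
  have Ja: "J = 2 * a * h" unfolding a_def using h by simp
  define c where "c = \<lceil>a - 1/2\<rceil>"
  have c1: "of_int c - 1 < a - 1/2" "a - 1/2 \<le> of_int c" unfolding c_def by linarith+
  have c2: "a - 1/2 \<noteq> of_int c" using ni unfolding a_def by (metis Ints_of_int)
  have c3: "a - 1/2 < of_int c" using c1 c2 by simp
  have cpos: "c \<ge> 1" using c3 a1 by linarith
  define l where "l = nat c"
  have lc: "real l = of_int c" unfolding l_def using cpos by simp
  have "(2 * real l - 1) < 2 * a" "2 * a < 2 * real l + 1" using c1 c3 lc by linarith+
  then have "(2 * real l - 1) * h < 2 * a * h" "2 * a * h < (2 * real l + 1) * h"
    using h by (intro mult_strict_right_mono; simp)+
  moreover have "l \<ge> 1" using cpos unfolding l_def by linarith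
  ultimately show ?thesis using Ja by auto
qed

lemma box_exists:
  fixes J h :: real and L l :: nat
  assumes h: "0 < h" and Jh: "2 * h \<le> J" and lo: "(2 * real l - 1) * h < J" and l1: "l \<ge> 1"
    and c: "real (2 * L * L) \<ge> (4 * J / h) ^ 2"
  shows "2 * int l + 4 \<le> int L"
proof -
  define a where "a = J / (2 * h)"
  have a1: "a \<ge> 1" unfolding a_def using h Jh by (simp add: field_simps)
  have Ja: "J = 2 * a * h" unfolding a_def using h by simp
  have "4 * J / h = 8 * a" unfolding Ja using h by simp
  then have LL: "real L * real L \<ge> 32 * a * a" using c by (simp add: power2_eq_square algebra_simps)
  have la: "2 * real l - 1 < 2 * a" using lo unfolding Ja using h
    by (metis mult.commute mult_less_cancel_left_pos)
  have L0: "real L \<ge> 0" by simp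
  show ?thesis
  proof (cases "l = 1")
    case True
    have aa: "a * a \<ge> 1 * 1" by (rule mult_mono) (use a1 in auto)
    have "32 * a * a = 32 * (a * a)" by simp
    then have "real L * real L \<ge> 32" using LL aa by linarith
    then have LL': "L * L \<ge> 32" by (metis of_nat_mult of_nat_numeral of_nat_le_iff)
    have "L \<ge> 6"
    proof (rule ccontr)
      assume "\<not> L \<ge> 6"
      then have "L \<le> 5" by simp
      then have "L * L \<le> 5 * 5" by (intro mult_le_mono)
      then show False using LL' by simp
    qed
    then show ?thesis using True by simp
  next
    case False
    then have "l \<ge> 2" using l1 by simp
    then have a2: "a > 3/2" using la by linarith
    have "(2 * a + 5) * (2 * a + 5) \<le> 32 * a * a"
    proof -
      obtain q where q: "q = (a - 3/2) * (a - 3/2)" by blast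
      have eq: "32 * a * a - (2 * a + 5) * (2 * a + 5) = 28 * q + 64 * (a - 3/2) + 8"
        unfolding q by (simp add: algebra_simps)
      have q0: "q \<ge> 0" unfolding q by simp
      have "32 * a * a - (2 * a + 5) * (2 * a + 5) \<ge> 0" using q0 a2 unfolding eq by simp
      then show ?thesis by simp
    qed
    then have "(2 * a + 5) * (2 * a + 5) \<le> real L * real L" using LL by linarith
    then have "(2 * a + 5)^2 \<le> (real L)^2" by (simp add: power2_eq_square)
    then have "2 * a + 5 \<le> real L" using L0 by (rule power2_le_imp_le)
    then have "2 * real l + 4 < real L" using la by linarith
    then show ?thesis by linarith
  qed
qed

theorem lemma4p5:
  fixes L :: nat and J h :: real and \<sigma> :: "site \<Rightarrow> int"
  assumes "L \<ge> 1"
    and "0 < h" and "h < 1" and "J \<ge> 2 * h"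
    and "J / (2 * h) - 1 / 2 \<notin> \<int>"
    and "real (card (Lam L)) \<ge> (4 * J / h) ^ 2"
    and "\<sigma> \<in> XV L J h (J - h) - {allminus L, allplus L}"
  shows "stab L J h \<sigma> \<le> ereal (2 * J)"
proof -
  note A = assms
  obtain l :: nat where l: "l \<ge> 1" "(2 * real l - 1) * h < J" "J < (2 * real l + 1) * h"
    using ell_exists[OF A(2) A(4) A(5)] by blast
  have bx: "2 * int l + 4 \<le> int L"
    using box_exists[OF A(2) A(4) l(2) l(1)] A(6) unfolding card_Lam by simp
  have L2: "L \<ge> 2" using bx l(1) by linarith
  have conf: "\<sigma> \<in> conf L" using A(7) unfolding XV_def by auto
  have np: "\<sigma> \<noteq> allplus L" and nm: "\<sigma> \<noteq> allminus L" using A(7) by auto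
  define s where "s = \<sigma> \<circ> pr L"
  have pm1: "\<forall>z\<in>Lam L. \<sigma> z = 1 \<or> \<sigma> z = -1" using conf unfolding conf_def by blast
  have out: "\<forall>z. z \<notin> Lam L \<longrightarrow> \<sigma> z = 0" using conf unfolding conf_def by blast
  have pmt: "pmt s" unfolding pmt_def s_def using pm1 pr_Lam[of L] A(1) by auto
  have per: "pr L x = pr L y \<Longrightarrow> s x = s y" for x y unfolding s_def by simp
  interpret tor L J h s
  proof
    show "2 \<le> L" by (rule L2)
    show "0 < h" by (rule A(2))
    show "2 * h \<le> J" by (rule A(4))
    show "pmt s" by (rule pmt)
    show "\<And>x y. pr L x = pr L y \<Longrightarrow> s x = s y" by (rule per)
  qed
  obtain zp where zp: "s zp = 1"
  proof -
    obtain z where "\<sigma> z \<noteq> allminus L z" using nm by (metis ext)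
    note zz = this
    have zL: "z \<in> Lam L"
    proof (rule ccontr)
      assume zn: "z \<notin> Lam L"
      have "\<sigma> z = 0" using out zn by blast
      moreover have "allminus L z = 0" using zn unfolding allminus_def by simp
      ultimately show False using zz by simp
    qed
    then have z: "z \<in> Lam L" "\<sigma> z = 1" using zz pm1 unfolding allminus_def by auto
    then have "s (int (fst z), int (fst (snd z)), snd (snd z)) = 1" unfolding s_def using pr_surj[OF z(1)] by simp
    then show ?thesis using that by blast
  qed
  obtain zm where zm: "s zm = -1"
  proof -
    obtain z where "\<sigma> z \<noteq> allplus L z" using np by (metis ext)
    note zz = this
    have zL: "z \<in> Lam L"
    proof (rule ccontr)
      assume zn: "z \<notin> Lam L"
      have "\<sigma> z = 0" using out zn by blast
      moreover have "allplus L z = 0" using zn unfolding allplus_def by simp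
      ultimately show False using zz by simp
    qed
    then have z: "z \<in> Lam L" "\<sigma> z = -1" using zz pm1 unfolding allplus_def by auto
    then have "s (int (fst z), int (fst (snd z)), snd (snd z)) = -1" unfolding s_def using pr_surj[OF z(1)] by simp
    then show ?thesis using that by blast
  qed
  have "\<exists>xs. gp L J h 0 s xs"
  proof (cases "loc_ok s")
    case False then show ?thesis using reduction by blast
  next
    case True
    interpret tor2 L J h s l
      using l bx True by unfold_locales auto
    obtain g where g: "autom L g" "std0 g" using frame_exists[OF zp zm] by blast
    have "std g" using g(2) unfolding std0_def std_def .
    then have good using from_std[OF g(1)] by blast
    then show ?thesis unfolding good_def by blast
  qed
  then obtain xs where "gp L J h 0 s xs" by blast
  then show ?thesis using gp_stab[OF L2 conf] Jpos unfolding s_def by simp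
qed



end
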